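(* Let $P$ be an abelian group, let $h\colon P\to\mathbb R$ and $s\in\mathbb R_{>0}$, and assume that for all $L_0,\dots,L_r\in P$ and $m=(m_1,\dots,m_r)\in\mathbb Z^r$ we have, as $|m|\to\infty$, $$h(m_1L_1+\dots+m_rL_r)=O(|m|^s)\quad\text{and}\quad h(L_0+m_1L_1+\dots+m_rL_r)-h(m_1L_1+\dots+m_rL_r)=O(|m|^{s-1}),$$ where $|m|=\sum_i|m_i|$ and the implied constants may depend on $L_0,\dots,L_r$. Then there is a unique function $\hat h\colon P_{\mathbb R}\to\mathbb R$ such that: (i) for every $L\in P$, $\hat h(L)=\limsup_{m\to+\infty}m^{-s}h(mL)$; (ii) $\hat h(tM)=t^s\hat h(M)$ for all $t\in\mathbb R_{\ge0}$ and $M\in P_{\mathbb R}$; (iii) $\hat h$ is continuous on every finite-dimensional real subspace of $P_{\mathbb R}$.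
   Context: $P_{\mathbb R}=P\otimes_{\mathbb Z}\mathbb R$, and the image of $L\in P$ in $P_{\mathbb R}$ is still denoted $L$. *)

theory Defs
  imports "HOL-Analysis.Analysis" "HOL-Library.Liminf_Limsup"
begin

definition zmul :: "int \<Rightarrow> 'a::ab_group_add \<Rightarrow> 'a" where
  "zmul k x = (if 0 \<le> k then (\<Sum>i<nat k. x) else - (\<Sum>i<nat (- k). x))"

text \<open>(V, iota) is the real tensor product P (x)_Z R, i.e. the real vector space
  V together with the canonical additive map iota : P -> V: iota is additive, its
  image spans V, and every additive map P -> R factors through a linear map V -> R.
  (Together with spanning this is equivalent to the full universal property.)\<close>
definition real_tensor :: "('p::ab_group_add \<Rightarrow> 'v::real_vector) \<Rightarrow> bool" where
  "real_tensor \<iota> \<longleftrightarrow>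
     (\<forall>a b. \<iota> (a + b) = \<iota> a + \<iota> b) \<and>
     span (range \<iota>) = UNIV \<and>
     (\<forall>f::'p \<Rightarrow> real. (\<forall>a b. f (a + b) = f a + f b) \<longrightarrow>
        (\<exists>g. linear g \<and> (\<forall>p. g (\<iota> p) = f p)))"

definition fin_dim_continuous :: "('v::real_vector \<Rightarrow> real) \<Rightarrow> bool" where
  "fin_dim_continuous H \<longleftrightarrow>
     (\<forall>(k::nat) (M::nat \<Rightarrow> 'v) (t::nat \<Rightarrow> real) (T::nat \<Rightarrow> nat \<Rightarrow> real).
        (\<forall>i<k. (\<lambda>n. T n i) \<longlonglongrightarrow> t i) \<longrightarrow>
        (\<lambda>n. H (\<Sum>i<k. T n i *\<^sub>R M i)) \<longlonglongrightarrow> H (\<Sum>i<k. t i *\<^sub>R M i))"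

end

theory Submission
  imports Defs "HOL-Analysis.Finite_Function_Topology"
begin


lemma zmul_0 [simp]: "zmul 0 x = 0"
  by (simp add: zmul_def)

lemma zmul_succ: "zmul (k + 1) x = zmul k x + x"
proof (cases "k \<ge> 0")
  case True
  then have "nat (k + 1) = Suc (nat k)" by simp
  then show ?thesis using True by (simp add: zmul_def add.commute)
next
  case False
  show ?thesis
  proof (cases "k = -1")
    case True then show ?thesis by (simp add: zmul_def)
  next
    case False2: False
    with False have k: "k + 1 < 0" by simp
    have "nat (- k) = Suc (nat (- (k + 1)))" using k by simp
    then show ?thesis using k False by (simp add: zmul_def)
  qed
qed

lemma zmul_succ': "zmul (1 + k) x = zmul k x + x"
  using zmul_succ[of k x] by (simp add: add.commute)

lemma zmul_pred: "zmul (k - 1) x = zmul k x - x"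
  using zmul_succ[of "k - 1" x] by simp

lemma zmul_pred': "zmul (-1 + k) x = zmul k x - x"
  using zmul_pred[of k x] by simp

lemma zmul_add: "zmul (a + b) x = zmul a x + zmul b x"
proof (induction b rule: int_induct[where k=0])
  case base then show ?case by simp
next
  case (step1 i)
  have "zmul (a + (i + 1)) x = zmul ((a + i) + 1) x" by (simp add: algebra_simps)
  also have "\<dots> = zmul a x + zmul i x + x" using step1 by (simp add: zmul_succ)
  also have "\<dots> = zmul a x + zmul (i+1) x" by (simp add: zmul_succ)
  finally show ?case .
next
  case (step2 i)
  have "zmul (a + (i - 1)) x = zmul ((a + i) - 1) x" by (simp add: algebra_simps)
  also have "\<dots> = zmul a x + zmul i x - x" using step2 by (simp add: zmul_pred)
  also have "\<dots> = zmul a x + zmul (i - 1) x" by (simp add: zmul_pred)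
  finally show ?case .
qed

lemma zmul_1 [simp]: "zmul 1 x = x"
  using zmul_succ[of 0 x] by simp

lemma zmul_neg: "zmul (- a) x = - zmul a x"
  using zmul_add[of a "-a" x] by (simp add: minus_unique)

lemma zmul_diff: "zmul (a - b) x = zmul a x - zmul b x"
  using zmul_add[of a "-b" x] zmul_neg[of b x] by simp

lemma zmul_distrib: "zmul a (x + y) = zmul a x + zmul a y"
proof (induction a rule: int_induct[where k=0])
  case base then show ?case by simp
next
  case (step1 i) then show ?case by (simp add: zmul_succ zmul_succ' algebra_simps)
next
  case (step2 i) then show ?case by (simp add: zmul_pred zmul_pred' algebra_simps)
qed

lemma zmul_zero [simp]: "zmul a (0::'a::ab_group_add) = 0"
  using zmul_distrib[of a "0::'a" 0] by simp

lemma zmul_uminus: "zmul a (- x) = - zmul a x"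
  using zmul_distrib[of a x "-x"] by (simp add: minus_unique)

lemma zmul_mult: "zmul (a * b) x = zmul a (zmul b x)"
proof (induction a rule: int_induct[where k=0])
  case base then show ?case by simp
next
  case (step1 i) then show ?case by (simp add: zmul_succ zmul_add algebra_simps)
next
  case (step2 i) then show ?case by (simp add: zmul_pred zmul_diff algebra_simps)
qed

lemma zmul_sum: "zmul a (\<Sum>i\<in>I. f i) = (\<Sum>i\<in>I. zmul a (f i))"
  by (induction I rule: infinite_finite_induct) (auto simp: zmul_distrib)

lemma additive_zmul:
  assumes "\<And>a b. g (a + b) = g a + g b"
  shows "g (zmul k x) = of_int k * g x"
proof -
  have g0: "g 0 = 0" using assms[of 0 0] by simp
  show ?thesis
  proof (induction k rule: int_induct[where k=0])
    case base then show ?case by (simp add: g0)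
  next
    case (step1 i) then show ?case by (simp add: zmul_succ zmul_succ' assms algebra_simps)
  next
    case (step2 i)
    have "g (zmul i x) = g (zmul (i - 1) x) + g x" using zmul_pred[of i x] assms
      by (metis diff_add_cancel)
    then show ?case using step2 by (simp add: algebra_simps)
  qed
qed

lemma additive_zmul_vec:
  fixes g :: "'a::ab_group_add \<Rightarrow> 'b::real_vector"
  assumes "\<And>a b. g (a + b) = g a + g b"
  shows "g (zmul k x) = of_int k *\<^sub>R g x"
proof -
  have g0: "g 0 = 0" using assms[of 0 0] by simp
  show ?thesis
  proof (induction k rule: int_induct[where k=0])
    case base then show ?case by (simp add: g0)
  next
    case (step1 i) then show ?case by (simp add: zmul_succ zmul_succ' assms algebra_simps)
  next
    case (step2 i)
    have "g (zmul i x) = g (zmul (i - 1) x) + g x" using zmul_pred[of i x] assms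
      by (metis diff_add_cancel)
    then show ?case using step2 by (simp add: algebra_simps)
  qed
qed


definition validG :: "'p::ab_group_add set \<Rightarrow> ('p \<Rightarrow> real) \<Rightarrow> ('p \<times> real) set \<Rightarrow> bool" where
  "validG A f G \<longleftrightarrow>
     (\<forall>x a b. (x,a)\<in>G \<longrightarrow> (x,b)\<in>G \<longrightarrow> a = b) \<and>
     (\<forall>x a y b. (x,a)\<in>G \<longrightarrow> (y,b)\<in>G \<longrightarrow> (x+y, a+b) \<in> G) \<and>
     (\<forall>x a. (x,a)\<in>G \<longrightarrow> (-x, -a) \<in> G) \<and>
     (\<forall>x\<in>A. (x, f x) \<in> G)"

lemma validG_D:
  assumes "validG A f G"
  shows "\<And>x a b. (x,a)\<in>G \<Longrightarrow> (x,b)\<in>G \<Longrightarrow> a = b"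
    and "\<And>x a y b. (x,a)\<in>G \<Longrightarrow> (y,b)\<in>G \<Longrightarrow> (x+y, a+b) \<in> G"
    and "\<And>x a. (x,a)\<in>G \<Longrightarrow> (-x, -a) \<in> G"
    and "\<And>x. x\<in>A \<Longrightarrow> (x, f x) \<in> G"
  using assms unfolding validG_def by blast+

lemma validG_mult:
  assumes v: "validG A f G" and xa: "(x,a) \<in> G"
  shows "(zmul n x, of_int n * a) \<in> G"
proof -
  have cl: "\<And>x a y b. (x,a)\<in>G \<Longrightarrow> (y,b)\<in>G \<Longrightarrow> (x+y, a+b) \<in> G"
    and ng: "\<And>x a. (x,a)\<in>G \<Longrightarrow> (-x, -a) \<in> G" using v unfolding validG_def by blast+
  have z: "(0, 0) \<in> G" using cl[OF xa ng[OF xa]] by simp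
  show ?thesis
  proof (induction n rule: int_induct[where k=0])
    case base then show ?case using z by simp
  next
    case (step1 i)
    from cl[OF step1(2) xa] show ?case by (simp add: zmul_succ zmul_succ' algebra_simps)
  next
    case (step2 i)
    from cl[OF step2(2) ng[OF xa]] show ?case by (simp add: zmul_pred algebra_simps)
  qed
qed

lemma additive_extension:
  fixes A :: "'p::ab_group_add set" and f :: "'p \<Rightarrow> real"
  assumes A0: "0 \<in> A" and Aadd: "\<And>x y. x\<in>A \<Longrightarrow> y\<in>A \<Longrightarrow> x + y \<in> A"
    and Aneg: "\<And>x. x\<in>A \<Longrightarrow> -x \<in> A"
    and fadd: "\<And>x y. x\<in>A \<Longrightarrow> y\<in>A \<Longrightarrow> f (x + y) = f x + f y"
  shows "\<exists>F. (\<forall>x y. F (x + y) = F x + F y) \<and> (\<forall>x\<in>A. F x = f x)"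
proof -
  define \<A> where "\<A> = {G. validG A f G}"
  define G0 where "G0 = {(x, f x) | x. x \<in> A}"
  have f0: "f 0 = 0" using fadd[OF A0 A0] by simp
  have fneg: "f (-x) = - f x" if "x \<in> A" for x
    using fadd[OF that Aneg[OF that]] f0 by simp
  have G0v: "G0 \<in> \<A>"
    unfolding \<A>_def validG_def G0_def mem_Collect_eq
    apply (intro conjI)
    subgoal by auto
    subgoal using Aadd fadd by fastforce
    subgoal using Aneg fneg by auto
    subgoal by auto
    done
  have "\<exists>M\<in>\<A>. \<forall>X\<in>\<A>. M \<subseteq> X \<longrightarrow> X = M"
  proof (rule Zorn_Lemma2, intro ballI)
    fix C assume C: "C \<in> chains \<A>"
    then have CA: "C \<subseteq> \<A>" and ch: "\<And>X Y. X \<in> C \<Longrightarrow> Y \<in> C \<Longrightarrow> X \<subseteq> Y \<or> Y \<subseteq> X"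
      unfolding chains_def chain_subset_def by blast+
    show "\<exists>U\<in>\<A>. \<forall>X\<in>C. X \<subseteq> U"
    proof (cases "C = {}")
      case True then show ?thesis using G0v by auto
    next
      case False
      then obtain X0 where X0: "X0 \<in> C" by blast
      have v: "\<And>X. X \<in> C \<Longrightarrow> validG A f X" using CA unfolding \<A>_def by blast
      have "validG A f (\<Union>C)"
        unfolding validG_def
      proof (intro conjI allI impI ballI)
        fix x a b assume "(x,a) \<in> \<Union>C" "(x,b) \<in> \<Union>C"
        then obtain X Y where "X\<in>C" "Y\<in>C" "(x,a)\<in>X" "(x,b)\<in>Y" by blast
        then show "a = b" using ch[of X Y] validG_D(1)[OF v[of X]] validG_D(1)[OF v[of Y]] by blast
      next
        fix x a y b assume "(x,a) \<in> \<Union>C" "(y,b) \<in> \<Union>C"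
        then obtain X Y where XY: "X\<in>C" "Y\<in>C" "(x,a)\<in>X" "(y,b)\<in>Y" by blast
        show "(x+y, a+b) \<in> \<Union>C"
        proof (cases "X \<subseteq> Y")
          case True then show ?thesis using XY validG_D(2)[OF v[of Y]] by blast
        next
          case False then have "Y \<subseteq> X" using ch XY by blast
          then show ?thesis using XY validG_D(2)[OF v[of X]] by blast
        qed
      next
        fix x a assume "(x,a) \<in> \<Union>C"
        then show "(-x, -a) \<in> \<Union>C" using validG_D(3)[OF v] by blast
      next
        fix x assume "x \<in> A"
        then show "(x, f x) \<in> \<Union>C" using validG_D(4)[OF v[OF X0]] X0 by blast
      qed
      then show ?thesis unfolding \<A>_def by blast
    qed
  qed
  then obtain M where MA: "M \<in> \<A>" and Mmax: "\<And>X. X \<in> \<A> \<Longrightarrow> M \<subseteq> X \<Longrightarrow> X = M" by blast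
  have vM: "validG A f M" using MA unfolding \<A>_def by simp
  have funM: "\<And>x a b. (x,a)\<in>M \<Longrightarrow> (x,b)\<in>M \<Longrightarrow> a = b"
    and cl: "\<And>x a y b. (x,a)\<in>M \<Longrightarrow> (y,b)\<in>M \<Longrightarrow> (x+y, a+b) \<in> M"
    and ng: "\<And>x a. (x,a)\<in>M \<Longrightarrow> (-x, -a) \<in> M"
    and ext: "\<And>x. x\<in>A \<Longrightarrow> (x, f x) \<in> M" using validG_D[OF vM] by blast+
  have M0: "(0,0) \<in> M" using ext[OF A0] f0 by simp
  have total: "\<exists>a. (x0, a) \<in> M" for x0
  proof (rule ccontr)
    assume nx: "\<not> (\<exists>a. (x0, a) \<in> M)"
    define c where "c = (if \<exists>n a. n \<noteq> 0 \<and> (zmul n x0, a) \<in> M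
       then (SOME q. \<exists>n a. n \<noteq> 0 \<and> (zmul n x0, a) \<in> M \<and> q = a / of_int n) else 0)"
    have cprop: "a = of_int n * c" if "(zmul n x0, a) \<in> M" for n a
    proof (cases "n = 0")
      case True then show ?thesis using that M0 funM by simp
    next
      case False
      then have ex: "\<exists>n a. n \<noteq> 0 \<and> (zmul n x0, a) \<in> M" using that by blast
      then have "\<exists>q. \<exists>n a. n \<noteq> 0 \<and> (zmul n x0, a) \<in> M \<and> q = a / of_int n" by blast
      from someI_ex[OF this] obtain n0 a0 where n0: "n0 \<noteq> 0" "(zmul n0 x0, a0) \<in> M"
        and cdef: "c = a0 / of_int n0" using ex unfolding c_def by auto
      have "(zmul n (zmul n0 x0), of_int n * a0) \<in> M" using validG_mult[OF vM n0(2)] .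
      moreover have "(zmul n0 (zmul n x0), of_int n0 * a) \<in> M" using validG_mult[OF vM that] .
      moreover have "zmul n (zmul n0 x0) = zmul n0 (zmul n x0)"
        by (simp add: zmul_mult[symmetric] mult.commute)
      ultimately have e: "of_int n * a0 = of_int n0 * a" using funM by metis
      have a0: "a0 = c * of_int n0" using n0(1) cdef by simp
      have "of_int n0 * a = of_int n0 * (of_int n * c)" using e unfolding a0 by (simp only: ac_simps)
      then show ?thesis using n0(1) by (metis mult_cancel_left of_int_eq_0_iff)
    qed
    define M' where "M' = {(y + zmul n x0, a + of_int n * c) | y a n. (y,a) \<in> M}"
    have "validG A f M'"
      unfolding validG_def
    proof (intro conjI allI impI ballI)
      fix x a b assume "(x,a) \<in> M'" "(x,b) \<in> M'"
      then obtain y1 a1 n1 y2 a2 n2 where e: "x = y1 + zmul n1 x0" "a = a1 + of_int n1 * c" "(y1,a1)\<in>M"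
        "x = y2 + zmul n2 x0" "b = a2 + of_int n2 * c" "(y2,a2)\<in>M"
        unfolding M'_def by blast
      have "(y2 + - y1, a2 + - a1) \<in> M" using cl[OF e(6) ng[OF e(3)]] .
      moreover have "y2 + - y1 = zmul (n1 - n2) x0" using e(1,4) by (simp add: zmul_diff algebra_simps)
      ultimately have "a2 - a1 = of_int (n1 - n2) * c" using cprop[of "n1 - n2" "a2 + - a1"] by simp
      then show "a = b" using e by (simp add: algebra_simps)
    next
      fix x a y b assume "(x,a) \<in> M'" "(y,b) \<in> M'"
      then obtain y1 a1 n1 y2 a2 n2 where e: "x = y1 + zmul n1 x0" "a = a1 + of_int n1 * c" "(y1,a1)\<in>M"
        "y = y2 + zmul n2 x0" "b = a2 + of_int n2 * c" "(y2,a2)\<in>M"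
        unfolding M'_def by blast
      have "(y1 + y2, a1 + a2) \<in> M" using cl[OF e(3) e(6)] .
      moreover have "x + y = (y1 + y2) + zmul (n1 + n2) x0" using e by (simp add: zmul_add algebra_simps)
      moreover have "a + b = (a1 + a2) + of_int (n1 + n2) * c" using e by (simp add: algebra_simps)
      ultimately show "(x + y, a + b) \<in> M'" unfolding M'_def by blast
    next
      fix x a assume "(x,a) \<in> M'"
      then obtain y1 a1 n1 where e: "x = y1 + zmul n1 x0" "a = a1 + of_int n1 * c" "(y1,a1)\<in>M"
        unfolding M'_def by blast
      have "(-y1, -a1) \<in> M" using ng[OF e(3)] .
      moreover have "-x = -y1 + zmul (-n1) x0" using e by (simp add: zmul_neg)
      moreover have "-a = -a1 + of_int (-n1) * c" using e by simp
      ultimately show "(-x, -a) \<in> M'" unfolding M'_def by blast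
    next
      fix x assume "x \<in> A"
      then have "(x + zmul 0 x0, f x + of_int 0 * c) \<in> M'" unfolding M'_def using ext by blast
      then show "(x, f x) \<in> M'" by simp
    qed
    moreover have "M \<subseteq> M'"
    proof
      fix p assume "p \<in> M"
      then obtain y a where "p = (y,a)" "(y,a) \<in> M" by (cases p) auto
      then have "(y + zmul 0 x0, a + of_int 0 * c) \<in> M'" unfolding M'_def by blast
      then show "p \<in> M'" using \<open>p = (y,a)\<close> by simp
    qed
    ultimately have "M' = M" using Mmax unfolding \<A>_def by blast
    moreover have "(0 + zmul 1 x0, 0 + of_int 1 * c) \<in> M'" unfolding M'_def using M0 by blast
    ultimately show False using nx by auto
  qed
  define F where "F x = (THE a. (x,a) \<in> M)" for x
  have Fx: "(x, F x) \<in> M" for x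
    unfolding F_def using total[of x] funM by (metis (no_types, lifting) theI)
  have Fu: "(x, a) \<in> M \<Longrightarrow> F x = a" for x a using Fx funM by blast
  show ?thesis
  proof (intro exI conjI allI ballI)
    fix x y show "F (x + y) = F x + F y" using Fu[OF cl[OF Fx Fx]] .
  next
    fix x assume "x \<in> A" then show "F x = f x" using Fu ext by blast
  qed
qed


definition LS :: "(real \<Rightarrow> real) \<Rightarrow> real" where
  "LS f = real_of_ereal (Limsup at_top (\<lambda>u. ereal (f u)))"

lemma LS_bounded:
  assumes "eventually (\<lambda>u. \<bar>f u\<bar> \<le> B) at_top"
  shows "Limsup at_top (\<lambda>u. ereal (f u)) = ereal (LS f)" "\<bar>LS f\<bar> \<le> B"
proof -
  have up: "Limsup at_top (\<lambda>u. ereal (f u)) \<le> ereal B"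
    by (rule Limsup_bounded) (use assms in \<open>auto elim!: eventually_mono\<close>)
  have lo: "ereal (- B) \<le> Limsup at_top (\<lambda>u. ereal (f u))"
    by (rule le_Limsup) (use assms in \<open>auto elim!: eventually_mono\<close>)
  from up lo obtain L where L: "Limsup at_top (\<lambda>u. ereal (f u)) = ereal L"
    by (cases "Limsup at_top (\<lambda>u. ereal (f u))") auto
  show "Limsup at_top (\<lambda>u. ereal (f u)) = ereal (LS f)" using L by (simp add: LS_def)
  show "\<bar>LS f\<bar> \<le> B" using up lo L by (simp add: LS_def)
qed

definition evbdd :: "(real \<Rightarrow> real) \<Rightarrow> bool" where
  "evbdd f \<longleftrightarrow> (\<exists>B. eventually (\<lambda>u. \<bar>f u\<bar> \<le> B) at_top)"

lemma LS_le:
  assumes bf: "evbdd f" and bg: "evbdd g"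
    and ev: "\<And>e. e > 0 \<Longrightarrow> eventually (\<lambda>u. f u \<le> g u + c + e) at_top"
  shows "LS f \<le> LS g + c"
proof (rule field_le_epsilon)
  fix e :: real assume e: "e > 0"
  have Lf: "Limsup at_top (\<lambda>u. ereal (f u)) = ereal (LS f)"
    using bf LS_bounded(1) unfolding evbdd_def by blast
  have Lg: "Limsup at_top (\<lambda>u. ereal (g u)) = ereal (LS g)"
    using bg LS_bounded(1) unfolding evbdd_def by blast
  have "Limsup at_top (\<lambda>u. ereal (f u)) \<le> Limsup at_top (\<lambda>u. ereal (g u) + ereal (c + e))"
    by (rule Limsup_mono) (use ev[OF e] in \<open>auto elim!: eventually_mono\<close>)
  also have "\<dots> = Limsup at_top (\<lambda>u. ereal (g u)) + ereal (c + e)"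
    by (rule Limsup_add_ereal_right) (use trivial_limit_at_top_linorder in auto)
  finally show "LS f \<le> LS g + c + e" using Lf Lg by simp
qed

lemma LS_close:
  assumes bf: "evbdd f" and bg: "evbdd g"
    and ev: "\<And>e. e > 0 \<Longrightarrow> eventually (\<lambda>u. \<bar>f u - g u\<bar> \<le> c + e) at_top"
  shows "\<bar>LS f - LS g\<bar> \<le> c"
proof -
  have "LS f \<le> LS g + c"
    by (rule LS_le[OF bf bg]) (use ev in \<open>fastforce elim!: eventually_mono\<close>)
  moreover have "LS g \<le> LS f + c"
    by (rule LS_le[OF bg bf]) (use ev in \<open>fastforce elim!: eventually_mono\<close>)
  ultimately show ?thesis by linarith
qed

lemma LS_eq:
  assumes bf: "evbdd f" and bg: "evbdd g"
    and ev: "\<And>e. e > 0 \<Longrightarrow> eventually (\<lambda>u. \<bar>f u - g u\<bar> \<le> e) at_top"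
  shows "LS f = LS g"
  using LS_close[OF bf bg, of 0] ev by simp

lemma filtermap_scale_at_top:
  assumes c: "(c::real) > 0"
  shows "filtermap (\<lambda>u. c * u) at_top = at_top"
proof (rule filter_eqI)
  fix P
  show "eventually P (filtermap (\<lambda>u. c * u) at_top) = eventually P at_top"
    unfolding eventually_filtermap eventually_at_top_linorder
  proof
    assume "\<exists>N. \<forall>n\<ge>N. P (c * n)"
    then obtain N where N: "\<And>n. n \<ge> N \<Longrightarrow> P (c * n)" by blast
    have "P v" if "v \<ge> c * N" for v
    proof -
      have "v / c \<ge> N" using that c by (simp add: field_simps)
      then show ?thesis using N[of "v / c"] c by simp
    qed
    then show "\<exists>N. \<forall>n\<ge>N. P n" by blast
  next
    assume "\<exists>N. \<forall>n\<ge>N. P n"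
    then obtain N where N: "\<And>n. n \<ge> N \<Longrightarrow> P n" by blast
    have "P (c * v)" if "v \<ge> N / c" for v
    proof -
      have "c * v \<ge> N" using that c by (simp add: field_simps)
      then show ?thesis using N by simp
    qed
    then show "\<exists>N. \<forall>n\<ge>N. P (c * n)" by blast
  qed
qed

lemma LS_scale:
  assumes c: "(c::real) > 0"
  shows "LS (\<lambda>u. f (c * u)) = LS f"
proof -
  have "inj (\<lambda>u::real. c * u)" using c by (auto intro: injI)
  then have "Limsup (filtermap (\<lambda>u. c * u) at_top) (\<lambda>v. ereal (f v)) =
      Limsup at_top (\<lambda>u. ereal (f (c * u)))"
    by (rule Limsup_filtermap_eq)
  then show ?thesis unfolding LS_def filtermap_scale_at_top[OF c] by simp
qed

lemma LS_cmult:
  assumes k: "(k::real) \<ge> 0" and bf: "evbdd f"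
  shows "LS (\<lambda>u. k * f u) = k * LS f"
proof -
  have Lf: "Limsup at_top (\<lambda>u. ereal (f u)) = ereal (LS f)"
    using bf LS_bounded(1) unfolding evbdd_def by blast
  have nb: "(at_top :: real filter) \<noteq> bot" using trivial_limit_at_top_linorder by blast
  have "Limsup at_top (\<lambda>u::real. ereal (k * f u)) = ereal k * Limsup at_top (\<lambda>u. ereal (f u))"
    using Limsup_ereal_mult_left[OF nb k, of "\<lambda>u. ereal (f u)"] by (simp only: times_ereal.simps)
  also have "\<dots> = ereal (k * LS f)" by (simp only: Lf times_ereal.simps)
  finally show ?thesis by (simp add: LS_def)
qed

lemma LS_cong_ev:
  assumes "eventually (\<lambda>u. f u = g u) at_top"
  shows "LS f = LS g"
proof -
  have "Limsup at_top (\<lambda>u. ereal (f u)) = Limsup at_top (\<lambda>u. ereal (g u))"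
    by (rule Limsup_eq) (use assms in \<open>auto elim!: eventually_mono\<close>)
  then show ?thesis by (simp add: LS_def)
qed

lemma Limsup_filter_mono:
  assumes "F \<le> G"
  shows "Limsup F f \<le> Limsup G f"
  unfolding Limsup_def
proof (rule INF_superset_mono)
  show "{P. eventually P G} \<subseteq> {P. eventually P F}"
    using assms by (auto simp: le_filter_def)
qed simp

lemma filtermap_nat_floor_at_top: "filtermap (\<lambda>u::real. nat \<lfloor>u\<rfloor>) at_top = sequentially"
proof (rule filter_eqI)
  fix P
  show "eventually P (filtermap (\<lambda>u::real. nat \<lfloor>u\<rfloor>) at_top) = eventually P sequentially"
    unfolding eventually_filtermap eventually_at_top_linorder eventually_sequentially
  proof
    assume "\<exists>N::real. \<forall>n\<ge>N. P (nat \<lfloor>n\<rfloor>)"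
    then obtain N :: real where N: "\<And>n. n \<ge> N \<Longrightarrow> P (nat \<lfloor>n\<rfloor>)" by blast
    have "P n" if "n \<ge> nat \<lceil>N\<rceil>" for n :: nat
    proof -
      have "real n \<ge> N" using that by linarith
      then show ?thesis using N[of "real n"] by simp
    qed
    then show "\<exists>N. \<forall>n\<ge>N. P n" by blast
  next
    assume "\<exists>N. \<forall>n\<ge>N. P n"
    then obtain N where N: "\<And>n. n \<ge> N \<Longrightarrow> P n" by blast
    have "P (nat \<lfloor>v\<rfloor>)" if "v \<ge> real N" for v :: real
    proof -
      have "nat \<lfloor>v\<rfloor> \<ge> N" using that by linarith
      then show ?thesis using N by simp
    qed
    then show "\<exists>N::real. \<forall>n\<ge>N. P (nat \<lfloor>n\<rfloor>)" by blast
  qed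
qed

lemma LS_nat:
  fixes a :: "nat \<Rightarrow> real"
  assumes B: "\<And>n. \<bar>a n\<bar> \<le> B"
  shows "ereal (LS (\<lambda>u. a (nat \<lfloor>u\<rfloor>))) = limsup (\<lambda>n. ereal (a n))"
proof -
  have bdd: "eventually (\<lambda>u::real. \<bar>a (nat \<lfloor>u\<rfloor>)\<bar> \<le> B) at_top" using B by simp
  have L: "Limsup at_top (\<lambda>u::real. ereal (a (nat \<lfloor>u\<rfloor>))) = ereal (LS (\<lambda>u. a (nat \<lfloor>u\<rfloor>)))"
    by (rule LS_bounded(1)[of "\<lambda>u. a (nat \<lfloor>u\<rfloor>)", OF bdd])
  have le: "Limsup at_top (\<lambda>u::real. ereal (a (nat \<lfloor>u\<rfloor>))) \<le> limsup (\<lambda>n. ereal (a n))"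
    using Limsup_filtermap_ge[of at_top "\<lambda>n. ereal (a n)" "\<lambda>u::real. nat \<lfloor>u\<rfloor>"]
    unfolding filtermap_nat_floor_at_top by simp
  have "limsup (\<lambda>n. ereal (a n)) = Limsup sequentially (\<lambda>n. ereal (a (nat \<lfloor>real n\<rfloor>)))"
    by simp
  also have "\<dots> = Limsup (filtermap real sequentially) (\<lambda>u::real. ereal (a (nat \<lfloor>u\<rfloor>)))"
    by (rule Limsup_filtermap_eq[symmetric]) (auto intro: injI)
  also have "\<dots> \<le> Limsup at_top (\<lambda>u::real. ereal (a (nat \<lfloor>u\<rfloor>)))"
    by (rule Limsup_filter_mono) (use filterlim_real_sequentially in \<open>simp add: filterlim_def\<close>)
  finally show ?thesis using le L by simp
qed

lemma LS_const0: "LS (\<lambda>u. 0) = 0"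
  by (simp add: LS_def Limsup_const)


definition gv :: "(nat \<Rightarrow> 'p::ab_group_add) \<Rightarrow> nat \<Rightarrow> (nat \<Rightarrow> int) \<Rightarrow> 'p" where
  "gv L r p = (\<Sum>i<r. zmul (p i) (L i))"

definition nrm :: "nat \<Rightarrow> (nat \<Rightarrow> int) \<Rightarrow> real" where
  "nrm r p = (\<Sum>i<r. real_of_int \<bar>p i\<bar>)"

lemma nrm_ge0: "nrm r p \<ge> 0" by (simp add: nrm_def sum_nonneg)

lemma nrm_coord: "i < r \<Longrightarrow> real_of_int \<bar>p i\<bar> \<le> nrm r p"
  unfolding nrm_def by (rule member_le_sum) auto

lemma sum_shift1: "(\<Sum>i\<in>{Suc 0..r}. g i) = (\<Sum>i<r. g (Suc i))"
  by (induction r) (auto simp: atLeastAtMostSuc_conv add.commute)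

lemma ratio_powr:
  fixes x y K a :: real
  assumes x: "x > 0" and y: "y > 0" and K: "K \<ge> 1" and l: "y \<le> K * x" and u: "x \<le> K * y"
  shows "x powr a \<le> K powr \<bar>a\<bar> * y powr a"
proof -
  have q: "(x / y) powr a \<le> K powr \<bar>a\<bar>"
  proof (cases "a \<ge> 0")
    case True
    have "x / y \<le> K" using u y by (simp add: field_simps)
    then show ?thesis using True x y by (simp add: powr_mono2)
  next
    case False
    have "(x / y) powr a = (y / x) powr (- a)"
      using x y by (simp add: powr_divide powr_minus_divide)
    also have "\<dots> \<le> K powr (- a)" using False x y l by (intro powr_mono2) (auto simp: field_simps)
    finally show ?thesis using False by simp
  qed
  have "x powr a = (x / y) powr a * y powr a" using x y by (simp add: powr_divide)
  also have "\<dots> \<le> K powr \<bar>a\<bar> * y powr a" using q by (simp add: mult_right_mono)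
  finally show ?thesis .
qed

locale htx =
  fixes h :: "'p::ab_group_add \<Rightarrow> real" and s :: real and \<iota> :: "'p \<Rightarrow> 'v::real_vector"
  assumes tensor: "real_tensor \<iota>"
    and s_pos: "s > 0"
    and growth: "\<And>(r::nat) (L::nat \<Rightarrow> 'p). \<exists>C R::real. \<forall>m::nat \<Rightarrow> int.
        R \<le> (\<Sum>i\<in>{1..r}. real_of_int \<bar>m i\<bar>) \<longrightarrow>
        \<bar>h (\<Sum>i\<in>{1..r}. zmul (m i) (L i))\<bar>
          \<le> C * (\<Sum>i\<in>{1..r}. real_of_int \<bar>m i\<bar>) powr s"
    and diff: "\<And>(r::nat) (L::nat \<Rightarrow> 'p). \<exists>C R::real. \<forall>m::nat \<Rightarrow> int.
        R \<le> (\<Sum>i\<in>{1..r}. real_of_int \<bar>m i\<bar>) \<longrightarrow>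
        \<bar>h (L 0 + (\<Sum>i\<in>{1..r}. zmul (m i) (L i))) - h (\<Sum>i\<in>{1..r}. zmul (m i) (L i))\<bar>
          \<le> C * (\<Sum>i\<in>{1..r}. real_of_int \<bar>m i\<bar>) powr (s - 1)"
begin

lemma growth0: "\<exists>C R. \<forall>p. R \<le> nrm r p \<longrightarrow> \<bar>h (gv L r p)\<bar> \<le> C * nrm r p powr s"
proof -
  obtain C R where CR: "\<And>m. R \<le> (\<Sum>i\<in>{1..r}. real_of_int \<bar>m i\<bar>) \<Longrightarrow>
        \<bar>h (\<Sum>i\<in>{1..r}. zmul (m i) ((\<lambda>i. L (i - 1)) i))\<bar>
          \<le> C * (\<Sum>i\<in>{1..r}. real_of_int \<bar>m i\<bar>) powr s"
    using growth[of r "\<lambda>i. L (i - 1)"] by blast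
  have "R \<le> nrm r p \<longrightarrow> \<bar>h (gv L r p)\<bar> \<le> C * nrm r p powr s" for p
    using CR[of "\<lambda>i. p (i - 1)"] by (simp add: sum_shift1 gv_def nrm_def)
  then show ?thesis by blast
qed

lemma diff0: "\<exists>C R. \<forall>p. R \<le> nrm r p \<longrightarrow> \<bar>h (y + gv L r p) - h (gv L r p)\<bar> \<le> C * nrm r p powr (s - 1)"
proof -
  obtain C R where CR: "\<And>m. R \<le> (\<Sum>i\<in>{1..r}. real_of_int \<bar>m i\<bar>) \<Longrightarrow>
        \<bar>h ((\<lambda>i. if i = 0 then y else L (i - 1)) 0 + (\<Sum>i\<in>{1..r}. zmul (m i) ((\<lambda>i. if i = 0 then y else L (i - 1)) i)))
          - h (\<Sum>i\<in>{1..r}. zmul (m i) ((\<lambda>i. if i = 0 then y else L (i - 1)) i))\<bar>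
          \<le> C * (\<Sum>i\<in>{1..r}. real_of_int \<bar>m i\<bar>) powr (s - 1)"
    using diff[of r "\<lambda>i. if i = 0 then y else L (i - 1)"] by blast
  have "R \<le> nrm r p \<longrightarrow> \<bar>h (y + gv L r p) - h (gv L r p)\<bar> \<le> C * nrm r p powr (s - 1)" for p
    using CR[of "\<lambda>i. p (i - 1)"] by (simp add: sum_shift1 gv_def nrm_def)
  then show ?thesis by blast
qed

lemma small_bound_y: "\<exists>B. \<forall>p. nrm r p \<le> N \<longrightarrow> \<bar>h (y + gv L r p)\<bar> \<le> B"
proof -
  define G where "G xs = h (y + (\<Sum>i<r. zmul (xs ! i) (L i)))" for xs :: "int list"
  define X where "X = {xs. set xs \<subseteq> {-\<lceil>N\<rceil>..\<lceil>N\<rceil>} \<and> length xs = r}"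
  have fX: "finite X" unfolding X_def by (rule finite_lists_length_eq) simp
  have "\<bar>h (y + gv L r p)\<bar> \<le> (\<Sum>xs\<in>X. \<bar>G xs\<bar>)" if p: "nrm r p \<le> N" for p
  proof -
    have mem: "map p [0..<r] \<in> X"
    proof -
      have "-\<lceil>N\<rceil> \<le> p i \<and> p i \<le> \<lceil>N\<rceil>" if "i < r" for i
        using nrm_coord[OF that, of p] p by linarith
      then show ?thesis unfolding X_def by auto
    qed
    have "h (y + gv L r p) = G (map p [0..<r])" unfolding G_def gv_def
      by (intro arg_cong[where f=h] arg_cong[where f="\<lambda>z. y + z"] sum.cong) auto
    then show ?thesis using member_le_sum[OF mem, of "\<lambda>xs. \<bar>G xs\<bar>"] fX by simp
  qed
  then show ?thesis by blast
qed

lemma small_bound: "\<exists>B. \<forall>p. nrm r p \<le> N \<longrightarrow> \<bar>h (gv L r p)\<bar> \<le> B"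
  using small_bound_y[of r N 0 L] by simp

lemma growth_bound: "\<exists>B\<ge>0. \<forall>p. \<bar>h (gv L r p)\<bar> \<le> B * (nrm r p + 1) powr s"
proof -
  obtain C R where CR: "\<And>p. R \<le> nrm r p \<Longrightarrow> \<bar>h (gv L r p)\<bar> \<le> C * nrm r p powr s"
    using growth0 by blast
  obtain B0 where B0: "\<And>p. nrm r p \<le> R \<Longrightarrow> \<bar>h (gv L r p)\<bar> \<le> B0"
    using small_bound by blast
  have "\<bar>h (gv L r p)\<bar> \<le> (\<bar>C\<bar> + \<bar>B0\<bar>) * (nrm r p + 1) powr s" for p
  proof -
    have n0: "nrm r p \<ge> 0" by (rule nrm_ge0)
    have one: "(nrm r p + 1) powr s \<ge> 1" using n0 s_pos by (intro ge_one_powr_ge_zero) auto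
    have mono: "nrm r p powr s \<le> (nrm r p + 1) powr s" using n0 s_pos by (intro powr_mono2) auto
    show ?thesis
    proof (cases "R \<le> nrm r p")
      case True
      have "\<bar>h (gv L r p)\<bar> \<le> C * nrm r p powr s" using CR[OF True] .
      also have "\<dots> \<le> \<bar>C\<bar> * nrm r p powr s" by (intro mult_right_mono) auto
      also have "\<dots> \<le> \<bar>C\<bar> * (nrm r p + 1) powr s" using mono by (intro mult_left_mono) auto
      also have "\<dots> \<le> (\<bar>C\<bar> + \<bar>B0\<bar>) * (nrm r p + 1) powr s"
        by (simp add: mult_right_mono)
      finally show ?thesis .
    next
      case False
      have "\<bar>h (gv L r p)\<bar> \<le> \<bar>B0\<bar>" using B0[of p] False by simp
      also have "\<dots> \<le> \<bar>B0\<bar> * (nrm r p + 1) powr s" using one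
        by (metis mult.right_neutral mult_left_mono abs_ge_zero)
      also have "\<dots> \<le> (\<bar>C\<bar> + \<bar>B0\<bar>) * (nrm r p + 1) powr s"
        by (simp add: mult_right_mono)
      finally show ?thesis .
    qed
  qed
  then show ?thesis by (intro exI[of _ "\<bar>C\<bar> + \<bar>B0\<bar>"]) auto
qed

lemma step_one: "\<exists>A\<ge>0. \<forall>p. \<bar>h (y + gv L r p) - h (gv L r p)\<bar> \<le> A * (nrm r p + 1) powr (s - 1)"
proof -
  obtain C R where CR: "\<And>p. R \<le> nrm r p \<Longrightarrow> \<bar>h (y + gv L r p) - h (gv L r p)\<bar> \<le> C * nrm r p powr (s - 1)"
    using diff0 by blast
  define R' where "R' = max R 1"
  obtain B0 where B0: "\<And>p. nrm r p \<le> R' + 1 \<Longrightarrow> \<bar>h (gv L r p)\<bar> \<le> B0"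
    using small_bound by blast
  obtain B1 where B1: "\<And>p. nrm r p \<le> R' + 1 \<Longrightarrow> \<bar>h (y + gv L r p)\<bar> \<le> B1"
    using small_bound_y by blast
  define \<kappa> where "\<kappa> = min 1 ((R' + 1) powr (s - 1))"
  have kpos: "\<kappa> > 0" unfolding \<kappa>_def using R'_def by simp
  define A where "A = \<bar>C\<bar> * 2 powr \<bar>s - 1\<bar> + (\<bar>B0\<bar> + \<bar>B1\<bar>) / \<kappa>"
  have A0: "A \<ge> 0" unfolding A_def using kpos by simp
  have "\<bar>h (y + gv L r p) - h (gv L r p)\<bar> \<le> A * (nrm r p + 1) powr (s - 1)" for p
  proof -
    have n0: "nrm r p \<ge> 0" by (rule nrm_ge0)
    have wpos: "(nrm r p + 1) powr (s - 1) \<ge> 0" by simp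
    show ?thesis
    proof (cases "R' \<le> nrm r p")
      case True
      then have n1: "nrm r p \<ge> 1" "R \<le> nrm r p" unfolding R'_def by auto
      have rat: "nrm r p powr (s - 1) \<le> 2 powr \<bar>s - 1\<bar> * (nrm r p + 1) powr (s - 1)"
        by (rule ratio_powr) (use n1 in auto)
      have "\<bar>h (y + gv L r p) - h (gv L r p)\<bar> \<le> C * nrm r p powr (s - 1)" using CR[OF n1(2)] .
      also have "\<dots> \<le> \<bar>C\<bar> * nrm r p powr (s - 1)" by (intro mult_right_mono) auto
      also have "\<dots> \<le> \<bar>C\<bar> * (2 powr \<bar>s - 1\<bar> * (nrm r p + 1) powr (s - 1))"
        using rat by (simp add: mult_left_mono)
      also have "\<dots> \<le> A * (nrm r p + 1) powr (s - 1)"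
        unfolding A_def using kpos wpos by (simp add: algebra_simps mult_right_mono)
      finally show ?thesis .
    next
      case False
      have w: "(nrm r p + 1) powr (s - 1) \<ge> \<kappa>"
      proof (cases "s \<ge> 1")
        case True
        then have "(nrm r p + 1) powr (s - 1) \<ge> 1" using n0 by (intro ge_one_powr_ge_zero) auto
        then show ?thesis unfolding \<kappa>_def by simp
      next
        case False2: False
        have "(nrm r p + 1) powr (s - 1) \<ge> (R' + 1) powr (s - 1)"
          using False False2 n0 by (intro powr_mono2') auto
        then show ?thesis unfolding \<kappa>_def by simp
      qed
      have "\<bar>h (y + gv L r p) - h (gv L r p)\<bar> \<le> \<bar>B1\<bar> + \<bar>B0\<bar>"
        using B0[of p] B1[of p] False by linarith
      also have "\<dots> = ((\<bar>B0\<bar> + \<bar>B1\<bar>) / \<kappa>) * \<kappa>" using kpos by simp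
      also have "\<dots> \<le> ((\<bar>B0\<bar> + \<bar>B1\<bar>) / \<kappa>) * (nrm r p + 1) powr (s - 1)"
        using w kpos by (intro mult_left_mono) auto
      also have "\<dots> \<le> A * (nrm r p + 1) powr (s - 1)"
        unfolding A_def using wpos by (intro mult_right_mono) (auto simp: mult_nonneg_nonneg)
      finally show ?thesis .
    qed
  qed
  then show ?thesis using A0 by blast
qed

end


definition nrmZ :: "nat \<Rightarrow> (nat \<Rightarrow> int) \<Rightarrow> int" where
  "nrmZ r p = (\<Sum>i<r. \<bar>p i\<bar>)"

lemma nrm_nrmZ: "nrm r p = real_of_int (nrmZ r p)"
  by (simp add: nrm_def nrmZ_def)

lemma gv_upd:
  assumes j: "j < r"
  shows "gv L r (p(j := p j + k)) = zmul k (L j) + gv L r p"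
proof -
  have "gv L r (p(j := p j + k)) = (\<Sum>i<r. zmul (p i) (L i) + (if i = j then zmul k (L j) else 0))"
    unfolding gv_def by (intro sum.cong) (auto simp: zmul_add)
  also have "\<dots> = gv L r p + zmul k (L j)"
    using j by (simp add: sum.distrib gv_def)
  finally show ?thesis by (simp add: add.commute)
qed

lemma gv_cong: "(\<And>i. i < r \<Longrightarrow> p i = q i) \<Longrightarrow> gv L r p = gv L r q"
  unfolding gv_def by (intro sum.cong) auto

lemma nrm_cong: "(\<And>i. i < r \<Longrightarrow> p i = q i) \<Longrightarrow> nrm r p = nrm r q"
  unfolding nrm_def by (intro sum.cong) auto

context htx
begin

lemma step: "\<exists>A\<ge>0. \<forall>p j k. j < r \<longrightarrow> (k = 1 \<or> k = -1) \<longrightarrow>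
   \<bar>h (gv L r (p(j := p j + k))) - h (gv L r p)\<bar> \<le> A * (nrm r p + 1) powr (s - 1)"
proof -
  have "\<forall>j k. \<exists>A\<ge>0. \<forall>p. \<bar>h (zmul k (L j) + gv L r p) - h (gv L r p)\<bar> \<le> A * (nrm r p + 1) powr (s - 1)"
    using step_one by blast
  then obtain Af where Af: "\<And>j k. Af j k \<ge> 0"
    "\<And>j k p. \<bar>h (zmul k (L j) + gv L r p) - h (gv L r p)\<bar> \<le> Af j k * (nrm r p + 1) powr (s - 1)"
    by metis
  define A where "A = (\<Sum>j<r. Af j 1 + Af j (-1))"
  have A0: "A \<ge> 0" unfolding A_def using Af(1) by (simp add: sum_nonneg add_nonneg_nonneg)
  have le: "Af j k \<le> A" if "j < r" "k = 1 \<or> k = -1" for j k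
  proof -
    have "Af j 1 + Af j (-1) \<le> A" unfolding A_def
      using that(1) Af(1) by (intro member_le_sum) (auto simp: add_nonneg_nonneg)
    then show ?thesis using that(2) Af(1)[of j 1] Af(1)[of j "-1"] by auto
  qed
  have "\<bar>h (gv L r (p(j := p j + k))) - h (gv L r p)\<bar> \<le> A * (nrm r p + 1) powr (s - 1)"
    if "j < r" "k = 1 \<or> k = -1" for p j k
  proof -
    have "\<bar>h (gv L r (p(j := p j + k))) - h (gv L r p)\<bar> \<le> Af j k * (nrm r p + 1) powr (s - 1)"
      by (subst gv_upd[OF that(1)]) (rule Af(2))
    also have "\<dots> \<le> A * (nrm r p + 1) powr (s - 1)"
      using le[OF that] by (intro mult_right_mono) auto
    finally show ?thesis .
  qed
  then show ?thesis using A0 by blast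
qed

lemma path:
  assumes A: "\<And>p j k. j < r \<Longrightarrow> (k = 1 \<or> k = -1) \<Longrightarrow>
     \<bar>h (gv L r (p(j := p j + k))) - h (gv L r p)\<bar> \<le> A * (nrm r p + 1) powr (s - 1)"
  shows "(\<And>q. nrm r (\<lambda>i. q i - p i) \<le> nrm r d \<Longrightarrow> A * (nrm r q + 1) powr (s - 1) \<le> c) \<Longrightarrow>
     \<bar>h (gv L r (\<lambda>i. p i + d i)) - h (gv L r p)\<bar> \<le> nrm r d * c"
proof (induction "nat (nrmZ r d)" arbitrary: d)
  case 0
  have nn: "nrmZ r d \<ge> 0" unfolding nrmZ_def by (simp add: sum_nonneg)
  then have z: "nrmZ r d = 0" using 0 by simp
  have "\<forall>i\<in>{..<r}. \<bar>d i\<bar> = 0" using z unfolding nrmZ_def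
    by (subst sum_nonneg_eq_0_iff[symmetric]) auto
  then have "gv L r (\<lambda>i. p i + d i) = gv L r p" by (intro gv_cong) auto
  then show ?case by (simp add: nrm_nrmZ z)
next
  case (Suc n)
  have pos: "nrmZ r d > 0" using Suc(2) by simp
  obtain j where j: "j < r" "d j \<noteq> 0"
  proof (rule ccontr)
    assume "\<not> thesis"
    then have "\<forall>i<r. d i = 0" using that by blast
    then have "nrmZ r d = 0" unfolding nrmZ_def by simp
    then show False using pos by simp
  qed
  define k where "k = sgn (d j)"
  have k: "k = 1 \<or> k = -1" using j(2) unfolding k_def by (auto simp: sgn_if)
  define d' where "d' = d(j := d j - k)"
  have absj: "\<bar>d' j\<bar> = \<bar>d j\<bar> - 1" unfolding d'_def k_def using j(2) by (auto simp: sgn_if)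
  have nd': "nrmZ r d' = nrmZ r d - 1"
  proof -
    have "nrmZ r d = \<bar>d j\<bar> + (\<Sum>i\<in>{..<r} - {j}. \<bar>d i\<bar>)"
      unfolding nrmZ_def using j(1) by (simp add: sum.remove)
    moreover have "nrmZ r d' = \<bar>d' j\<bar> + (\<Sum>i\<in>{..<r} - {j}. \<bar>d' i\<bar>)"
      unfolding nrmZ_def using j(1) by (simp add: sum.remove)
    moreover have "(\<Sum>i\<in>{..<r} - {j}. \<bar>d' i\<bar>) = (\<Sum>i\<in>{..<r} - {j}. \<bar>d i\<bar>)"
      unfolding d'_def by (intro sum.cong) auto
    ultimately show ?thesis using absj by simp
  qed
  have nd'r: "nrm r d' = nrm r d - 1" using nd' by (simp add: nrm_nrmZ)
  have IH: "\<bar>h (gv L r (\<lambda>i. p i + d' i)) - h (gv L r p)\<bar> \<le> nrm r d' * c"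
  proof (rule Suc(1))
    show "n = nat (nrmZ r d')" using nd' Suc(2) by simp
    fix q assume "nrm r (\<lambda>i. q i - p i) \<le> nrm r d'"
    then show "A * (nrm r q + 1) powr (s - 1) \<le> c" using Suc(3)[of q] nd'r by simp
  qed
  define q0 where "q0 = (\<lambda>i. p i + d' i)"
  have "nrm r (\<lambda>i. q0 i - p i) = nrm r d'" unfolding q0_def by simp
  then have wq: "A * (nrm r q0 + 1) powr (s - 1) \<le> c" using Suc(3)[of q0] nd'r by simp
  have st: "\<bar>h (gv L r (q0(j := q0 j + k))) - h (gv L r q0)\<bar> \<le> c"
    using A[OF j(1) k, of q0] wq by simp
  have eq: "q0(j := q0 j + k) = (\<lambda>i. p i + d i)"
    unfolding q0_def d'_def by auto
  have st': "\<bar>h (gv L r (\<lambda>i. p i + d i)) - h (gv L r q0)\<bar> \<le> c" using st unfolding eq .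
  have IH': "\<bar>h (gv L r q0) - h (gv L r p)\<bar> \<le> nrm r d' * c" using IH unfolding q0_def .
  have "\<bar>h (gv L r (\<lambda>i. p i + d i)) - h (gv L r p)\<bar> \<le> c + nrm r d' * c"
    using st' IH' by linarith
  also have "\<dots> = nrm r d * c" unfolding nd'r by (simp add: algebra_simps)
  finally show ?case .
qed

end


lemma ev_powr_small:
  assumes a: "a < 0" and e: "e > 0"
  shows "eventually (\<lambda>u::real. K * u powr a \<le> e) at_top"
proof -
  have "((\<lambda>u::real. u powr a) \<longlongrightarrow> 0) at_top"
    by (rule tendsto_neg_powr[OF a filterlim_ident])
  then have "((\<lambda>u::real. K * u powr a) \<longlongrightarrow> K * 0) at_top"
    by (intro tendsto_mult tendsto_const)
  then have "eventually (\<lambda>u::real. K * u powr a < e) at_top"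
    using e by (intro order_tendstoD(2)) auto
  then show ?thesis by (auto elim!: eventually_mono)
qed

lemma small_powr:
  fixes B e s :: real
  assumes B: "B \<ge> 0" and e: "e > 0" and s: "s > 0"
  shows "\<exists>d>0. B * (2 * d) powr s < e"
proof -
  define x where "x = e / (B + 1)"
  have x: "x > 0" unfolding x_def using B e by simp
  define d where "d = (x powr (1 / s)) / 2"
  have d: "d > 0" unfolding d_def using x by simp
  have "(2 * d) powr s = x" unfolding d_def using x s by (simp add: powr_powr)
  then have "B * (2 * d) powr s = B * e / (B + 1)" unfolding x_def by simp
  also have "\<dots> < e" using B e by (simp add: field_simps)
  finally show ?thesis using d by blast
qed

lemma floor_diff_bound:
  fixes u x y :: real
  assumes "u \<ge> 0"
  shows "\<bar>real_of_int (\<lfloor>u * x\<rfloor> - \<lfloor>u * y\<rfloor>)\<bar> \<le> u * \<bar>x - y\<bar> + 1"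
proof -
  have "\<bar>u * x - u * y\<bar> = u * \<bar>x - y\<bar>" using assms by (simp add: abs_mult right_diff_distrib[symmetric])
  moreover have "real_of_int \<lfloor>u * x\<rfloor> \<le> u * x" "u * x < real_of_int \<lfloor>u * x\<rfloor> + 1"
    "real_of_int \<lfloor>u * y\<rfloor> \<le> u * y" "u * y < real_of_int \<lfloor>u * y\<rfloor> + 1"
    by linarith+
  ultimately show ?thesis by (simp add: abs_le_iff) linarith
qed

lemma floor_abs_bound:
  fixes x :: real
  shows "\<bar>real_of_int \<lfloor>x\<rfloor>\<bar> \<le> \<bar>x\<bar> + 1" "\<bar>x\<bar> \<le> \<bar>real_of_int \<lfloor>x\<rfloor>\<bar> + 1"
proof -
  have "real_of_int \<lfloor>x\<rfloor> \<le> x" "x < real_of_int \<lfloor>x\<rfloor> + 1" by linarith+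
  then show "\<bar>real_of_int \<lfloor>x\<rfloor>\<bar> \<le> \<bar>x\<bar> + 1" "\<bar>x\<bar> \<le> \<bar>real_of_int \<lfloor>x\<rfloor>\<bar> + 1" by linarith+
qed

definition nrmR :: "nat \<Rightarrow> (nat \<Rightarrow> real) \<Rightarrow> real" where
  "nrmR r c = (\<Sum>i<r. \<bar>c i\<bar>)"

lemma nrmR_ge0: "nrmR r c \<ge> 0" by (simp add: nrmR_def sum_nonneg)

lemma nrm_floor_up:
  assumes u: "u \<ge> 0"
  shows "nrm r (\<lambda>i. \<lfloor>u * c i\<rfloor>) \<le> u * nrmR r c + r"
proof -
  have "nrm r (\<lambda>i. \<lfloor>u * c i\<rfloor>) \<le> (\<Sum>i<r. u * \<bar>c i\<bar> + 1)"
    unfolding nrm_def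
  proof (intro sum_mono)
    fix i
    have "\<bar>u * c i\<bar> = u * \<bar>c i\<bar>" using u by (simp add: abs_mult)
    then show "real_of_int \<bar>\<lfloor>u * c i\<rfloor>\<bar> \<le> u * \<bar>c i\<bar> + 1"
      using floor_abs_bound(1)[of "u * c i"] by simp
  qed
  also have "\<dots> = u * nrmR r c + r" by (simp add: sum.distrib sum_distrib_left nrmR_def)
  finally show ?thesis .
qed

lemma nrm_floor_lo:
  assumes u: "u \<ge> 0"
  shows "nrm r (\<lambda>i. \<lfloor>u * c i\<rfloor>) \<ge> u * nrmR r c - r"
proof -
  have "u * nrmR r c - r = (\<Sum>i<r. u * \<bar>c i\<bar> - 1)" by (simp add: sum_subtractf sum_distrib_left nrmR_def)
  also have "\<dots> \<le> nrm r (\<lambda>i. \<lfloor>u * c i\<rfloor>)"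
    unfolding nrm_def
  proof (intro sum_mono)
    fix i
    have "\<bar>u * c i\<bar> = u * \<bar>c i\<bar>" using u by (simp add: abs_mult)
    then show "u * \<bar>c i\<bar> - 1 \<le> real_of_int \<bar>\<lfloor>u * c i\<rfloor>\<bar>"
      using floor_abs_bound(2)[of "u * c i"] by simp
  qed
  finally show ?thesis .
qed

lemma nrm_triangle: "nrm r (\<lambda>i. p i + q i) \<le> nrm r p + nrm r q"
proof -
  have "nrm r (\<lambda>i. p i + q i) \<le> (\<Sum>i<r. real_of_int \<bar>p i\<bar> + real_of_int \<bar>q i\<bar>)"
    unfolding nrm_def by (intro sum_mono) simp
  then show ?thesis by (simp add: nrm_def sum.distrib)
qed

lemma nrm_tri_lo: "nrm r p - nrm r (\<lambda>i. q i - p i) \<le> nrm r q"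
proof -
  have "nrm r p \<le> nrm r q + nrm r (\<lambda>i. p i - q i)"
    using nrm_triangle[of r q "\<lambda>i. p i - q i"] by simp
  moreover have "nrm r (\<lambda>i. p i - q i) = nrm r (\<lambda>i. q i - p i)"
    unfolding nrm_def by (simp add: abs_minus_commute)
  ultimately show ?thesis by simp
qed

lemma nrm_tri_up: "nrm r q \<le> nrm r p + nrm r (\<lambda>i. q i - p i)"
  using nrm_triangle[of r p "\<lambda>i. q i - p i"] by simp

context htx
begin

definition FF :: "(nat \<Rightarrow> 'p) \<Rightarrow> nat \<Rightarrow> (nat \<Rightarrow> real) \<Rightarrow> real \<Rightarrow> real" where
  "FF L r c u = h (gv L r (\<lambda>i. \<lfloor>u * c i\<rfloor>)) / u powr s"

definition Phi :: "(nat \<Rightarrow> 'p) \<Rightarrow> nat \<Rightarrow> (nat \<Rightarrow> real) \<Rightarrow> real" where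
  "Phi L r c = LS (FF L r c)"

lemma FF_bound_eps:
  obtains B where "B \<ge> 0" "\<And>c e u. e > 0 \<Longrightarrow> nrmR r c \<le> e \<Longrightarrow> u \<ge> 1 \<Longrightarrow> u \<ge> (r + 1) / e \<Longrightarrow>
      \<bar>FF L r c u\<bar> \<le> B * (2 * e) powr s"
proof -
  obtain B where B: "B \<ge> 0" "\<And>p. \<bar>h (gv L r p)\<bar> \<le> B * (nrm r p + 1) powr s"
    using growth_bound by blast
  have "\<bar>FF L r c u\<bar> \<le> B * (2 * e) powr s"
    if e: "e > 0" "nrmR r c \<le> e" and u: "u \<ge> 1" "u \<ge> (r + 1) / e" for c e u
  proof -
    have "nrm r (\<lambda>i. \<lfloor>u * c i\<rfloor>) + 1 \<le> u * e + r + 1"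
      using nrm_floor_up[of u r c] u e by (smt (verit) mult_left_mono)
    also have "\<dots> \<le> 2 * u * e" using u e by (simp add: field_simps)
    finally have n: "nrm r (\<lambda>i. \<lfloor>u * c i\<rfloor>) + 1 \<le> 2 * u * e" .
    have "\<bar>h (gv L r (\<lambda>i. \<lfloor>u * c i\<rfloor>))\<bar> \<le> B * (2 * u * e) powr s"
      using B(2)[of "\<lambda>i. \<lfloor>u * c i\<rfloor>"] n B(1) nrm_ge0[of r "\<lambda>i. \<lfloor>u * c i\<rfloor>"] s_pos
      by (smt (verit) mult_left_mono powr_mono2)
    also have "\<dots> = B * (2 * e) powr s * u powr s" using u e by (simp add: powr_mult)
    finally show ?thesis using u unfolding FF_def by (simp add: abs_div field_simps)
  qed
  then show ?thesis using that B(1) by blast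
qed

lemma FF_evbdd: "evbdd (FF L r c)"
proof -
  obtain B where B: "B \<ge> 0" "\<And>c e u. e > 0 \<Longrightarrow> nrmR r c \<le> e \<Longrightarrow> u \<ge> 1 \<Longrightarrow> u \<ge> (r + 1) / e \<Longrightarrow>
      \<bar>FF L r c u\<bar> \<le> B * (2 * e) powr s" using FF_bound_eps by blast
  define e where "e = nrmR r c + 1"
  have e: "e > 0" "nrmR r c \<le> e" unfolding e_def using nrmR_ge0[of r c] by auto
  have "eventually (\<lambda>u. u \<ge> max 1 ((r + 1) / e)) at_top" by (rule eventually_ge_at_top)
  then have "eventually (\<lambda>u. \<bar>FF L r c u\<bar> \<le> B * (2 * e) powr s) at_top"
    by eventually_elim (use B(2)[OF e] in auto)
  then show ?thesis unfolding evbdd_def by blast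
qed

lemma Phi_small: "\<exists>B\<ge>0. \<forall>e>0. \<forall>c. nrmR r c \<le> e \<longrightarrow> \<bar>Phi L r c\<bar> \<le> B * (2 * e) powr s"
proof -
  obtain B where B: "B \<ge> 0" "\<And>c e u. e > 0 \<Longrightarrow> nrmR r c \<le> e \<Longrightarrow> u \<ge> 1 \<Longrightarrow> u \<ge> (r + 1) / e \<Longrightarrow>
      \<bar>FF L r c u\<bar> \<le> B * (2 * e) powr s" using FF_bound_eps by blast
  have "\<bar>Phi L r c\<bar> \<le> B * (2 * e) powr s" if e: "e > 0" "nrmR r c \<le> e" for e c
  proof -
    have "eventually (\<lambda>u. u \<ge> max 1 ((r + 1) / e)) at_top" by (rule eventually_ge_at_top)
    then have "eventually (\<lambda>u. \<bar>FF L r c u\<bar> \<le> B * (2 * e) powr s) at_top"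
      by eventually_elim (use B(2)[OF e] in auto)
    then show ?thesis unfolding Phi_def by (rule LS_bounded(2))
  qed
  then show ?thesis using B(1) by blast
qed

lemma Phi_zero: "nrmR r c = 0 \<Longrightarrow> Phi L r c = 0"
proof -
  assume z: "nrmR r c = 0"
  obtain B where B: "B \<ge> 0" "\<And>e c. e > 0 \<Longrightarrow> nrmR r c \<le> e \<Longrightarrow> \<bar>Phi L r c\<bar> \<le> B * (2 * e) powr s"
    using Phi_small by blast
  have lt: "\<bar>Phi L r c\<bar> < e" if e: "e > 0" for e
  proof -
    obtain d where d: "d > 0" "B * (2 * d) powr s < e" using small_powr[OF B(1) e s_pos] by blast
    show ?thesis using B(2)[of d c] d z by simp
  qed
  have "\<bar>Phi L r c\<bar> \<le> 0"
  proof (rule field_le_epsilon)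
    fix e :: real assume "0 < e" then show "\<bar>Phi L r c\<bar> \<le> 0 + e" using lt[of e] by simp
  qed
  then show ?thesis by simp
qed

lemma FF_cong:
  assumes "\<And>i. i < r \<Longrightarrow> c i = c' i"
  shows "FF L r c = FF L r c'"
proof -
  have "\<And>u. gv L r (\<lambda>i. \<lfloor>u * c i\<rfloor>) = gv L r (\<lambda>i. \<lfloor>u * c' i\<rfloor>)"
    by (rule gv_cong) (simp add: assms)
  then show ?thesis unfolding FF_def by presburger
qed

lemma Phi_cong: "(\<And>i. i < r \<Longrightarrow> c i = c' i) \<Longrightarrow> Phi L r c = Phi L r c'"
  unfolding Phi_def using FF_cong by metis

lemma evbdd_scale:
  assumes "evbdd f" "(t::real) > 0"
  shows "evbdd (\<lambda>u. f (t * u))"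
proof -
  obtain B where B: "eventually (\<lambda>u. \<bar>f u\<bar> \<le> B) at_top" using assms(1) unfolding evbdd_def by blast
  then have "eventually (\<lambda>u. \<bar>f u\<bar> \<le> B) (filtermap (\<lambda>u. t * u) at_top)"
    using filtermap_scale_at_top[OF assms(2)] by simp
  then show ?thesis unfolding evbdd_def eventually_filtermap by blast
qed

lemma Phi_scale:
  assumes t: "t > 0"
  shows "Phi L r (\<lambda>i. t * c i) = t powr s * Phi L r c"
proof -
  have "eventually (\<lambda>u. FF L r (\<lambda>i. t * c i) u = t powr s * FF L r c (t * u)) at_top"
    using eventually_gt_at_top[of 0]
  proof eventually_elim
    case (elim u)
    have "(t * u) powr s = t powr s * u powr s" using t elim by (simp add: powr_mult)
    then show ?case unfolding FF_def using t elim by (simp add: mult.assoc mult.left_commute)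
  qed
  then have "Phi L r (\<lambda>i. t * c i) = LS (\<lambda>u. t powr s * FF L r c (t * u))"
    unfolding Phi_def by (rule LS_cong_ev)
  also have "\<dots> = t powr s * LS (\<lambda>u. FF L r c (t * u))"
    by (rule LS_cmult) (auto intro: evbdd_scale FF_evbdd t)
  also have "\<dots> = t powr s * Phi L r c" unfolding Phi_def using LS_scale[OF t] by simp
  finally show ?thesis .
qed

end


lemma gv_add: "gv L r (\<lambda>i. p i + q i) = gv L r p + gv L r q"
  unfolding gv_def by (simp add: zmul_add sum.distrib)

lemma gv_smul: "gv L r (\<lambda>i. n * q i) = zmul n (gv L r q)"
  unfolding gv_def by (simp add: zmul_mult zmul_sum)

lemma floor_shift_bound:
  fixes x y :: real
  shows "\<bar>real_of_int (\<lfloor>x + y\<rfloor> - \<lfloor>x\<rfloor>)\<bar> \<le> \<bar>y\<bar> + 1"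
proof -
  have "real_of_int \<lfloor>x + y\<rfloor> \<le> x + y" "x + y < real_of_int \<lfloor>x + y\<rfloor> + 1"
    "real_of_int \<lfloor>x\<rfloor> \<le> x" "x < real_of_int \<lfloor>x\<rfloor> + 1" by linarith+
  then show ?thesis by (simp add: abs_le_iff) linarith
qed

context htx
begin

lemma weight_bound:
  assumes x: "x \<ge> 1" "x \<le> y"
  shows "x powr (s - 1) \<le> y powr (max (s - 1) 0)"
proof (cases "s \<ge> 1")
  case True
  then show ?thesis using x by (simp add: max_def powr_mono2)
next
  case False
  have "x powr (s - 1) \<le> x powr 0" using False x by (intro powr_mono) auto
  then show ?thesis using False x by (simp add: max_def)
qed

lemma Phi_rat_inv:
  assumes tz: "zmul k (gv L r z) = 0" and k: "k > 0" and b: "b > 0"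
  shows "Phi L r (\<lambda>i. c i + of_int a / of_int b * of_int (z i)) = Phi L r c"
proof -
  define c' where "c' = (\<lambda>i. c i + of_int a / of_int b * of_int (z i))"
  obtain A where A: "A \<ge> 0" "\<And>p j k. j < r \<Longrightarrow> (k = 1 \<or> k = -1) \<Longrightarrow>
     \<bar>h (gv L r (p(j := p j + k))) - h (gv L r p)\<bar> \<le> A * (nrm r p + 1) powr (s - 1)"
    using step by blast
  define D where "D = (\<Sum>i<r. real_of_int (k * \<bar>a\<bar> * \<bar>z i\<bar>) + 1)"
  define E where "E = nrmR r c + r + D + 1"
  define \<sigma> where "\<sigma> = max (s - 1) 0"
  have D0: "D \<ge> 0" unfolding D_def using k by (intro sum_nonneg) simp
  have E1: "E \<ge> 1" unfolding E_def using D0 nrmR_ge0[of r c] by simp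
  have \<sigma>s: "\<sigma> - s < 0" unfolding \<sigma>_def using s_pos by simp
  have claim: "\<bar>FF L r c' u - FF L r c u\<bar> \<le> D * A * E powr \<sigma> * u powr (\<sigma> - s)" if u: "u \<ge> 1" for u
  proof -
    define Kk where "Kk = b * k"
    have Kk: "Kk > 0" unfolding Kk_def using b k by simp
    define w where "w = \<lfloor>u / of_int Kk\<rfloor>"
    define \<rho> where "\<rho> = u - of_int Kk * of_int w"
    have Kr: "real_of_int Kk > 0" using Kk by simp
    have w1: "of_int w \<le> u / of_int Kk" unfolding w_def by (rule of_int_floor_le)
    have w2: "u / of_int Kk < of_int w + 1" unfolding w_def by linarith
    have \<rho>0: "\<rho> \<ge> 0" using w1 Kr unfolding \<rho>_def by (simp add: pos_le_divide_eq mult.commute)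
    have "u < (of_int w + 1) * of_int Kk" using w2 Kr by (simp add: pos_divide_less_eq)
    then have \<rho>1: "\<rho> < of_int Kk" unfolding \<rho>_def by (simp add: algebra_simps)
    define m where "m = (\<lambda>i. \<lfloor>u * c i\<rfloor>)"
    define e where "e = (\<lambda>i. \<lfloor>u * c i + \<rho> * of_int a * of_int (z i) / of_int b\<rfloor> - \<lfloor>u * c i\<rfloor>)"
    have f1: "\<lfloor>u * c' i\<rfloor> = m i + e i + (w * a) * (k * z i)" for i
    proof -
      have bne: "real_of_int b \<noteq> 0" using b by simp
      have eq: "u * c' i = (u * c i + \<rho> * of_int a * of_int (z i) / of_int b) + of_int ((w * a) * (k * z i))"
        unfolding c'_def \<rho>_def Kk_def using bne by (simp add: field_simps)
      have "\<lfloor>u * c' i\<rfloor> = \<lfloor>u * c i + \<rho> * of_int a * of_int (z i) / of_int b\<rfloor> + (w * a) * (k * z i)"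
        unfolding eq by (rule floor_add_int[symmetric])
      then show ?thesis unfolding m_def e_def by simp
    qed
    have f2: "gv L r (\<lambda>i. \<lfloor>u * c' i\<rfloor>) = gv L r (\<lambda>i. m i + e i)"
    proof -
      have "gv L r (\<lambda>i. \<lfloor>u * c' i\<rfloor>) = gv L r (\<lambda>i. (m i + e i) + (w * a) * (k * z i))"
        using f1 by simp
      also have "\<dots> = gv L r (\<lambda>i. m i + e i) + zmul (w * a) (zmul k (gv L r z))"
        by (simp only: gv_add gv_smul)
      finally show ?thesis using tz by simp
    qed
    have f3: "nrm r e \<le> D"
      unfolding nrm_def D_def
    proof (rule sum_mono)
      fix i
      have "\<bar>real_of_int (e i)\<bar> \<le> \<bar>\<rho> * of_int a * of_int (z i) / of_int b\<bar> + 1"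
        unfolding e_def by (rule floor_shift_bound)
      also have "\<bar>\<rho> * of_int a * of_int (z i) / of_int b\<bar> = (\<rho> / of_int b) * (\<bar>of_int a\<bar> * \<bar>of_int (z i)\<bar>)"
        using \<rho>0 b by (simp add: abs_mult abs_divide)
      also have "\<rho> / of_int b \<le> of_int k" using \<rho>1 b unfolding Kk_def by (simp add: field_simps)
      then have "(\<rho> / of_int b) * (\<bar>of_int a\<bar> * \<bar>of_int (z i)\<bar>) \<le> of_int k * (\<bar>of_int a\<bar> * \<bar>of_int (z i)\<bar>)"
        by (intro mult_right_mono) auto
      finally show "real_of_int \<bar>e i\<bar> \<le> real_of_int (k * \<bar>a\<bar> * \<bar>z i\<bar>) + 1" by simp
    qed
    have wt: "A * (nrm r q + 1) powr (s - 1) \<le> A * (u * E) powr \<sigma>"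
      if q: "nrm r (\<lambda>i. q i - m i) \<le> nrm r e" for q
    proof -
      have "nrm r q \<le> nrm r m + nrm r (\<lambda>i. q i - m i)" by (rule nrm_tri_up)
      also have "\<dots> \<le> u * nrmR r c + r + D" using nrm_floor_up[of u r c] u q f3 unfolding m_def by simp
      moreover have "1 * (r + D + 1) \<le> u * (r + D + 1)" using u D0 by (intro mult_right_mono) auto
      ultimately have "nrm r q + 1 \<le> u * E" unfolding E_def by (simp add: distrib_left)
      then have "(nrm r q + 1) powr (s - 1) \<le> (u * E) powr \<sigma>"
        unfolding \<sigma>_def using nrm_ge0[of r q] by (intro weight_bound) auto
      then show ?thesis using A(1) by (intro mult_left_mono) auto
    qed
    have "\<bar>h (gv L r (\<lambda>i. m i + e i)) - h (gv L r m)\<bar> \<le> nrm r e * (A * (u * E) powr \<sigma>)"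
      by (rule path[where p=m and d=e and c="A * (u * E) powr \<sigma>", OF A(2) wt])
    also have "\<dots> \<le> D * (A * (u * E) powr \<sigma>)" using f3 A(1) by (intro mult_right_mono) auto
    finally have hb: "\<bar>h (gv L r (\<lambda>i. \<lfloor>u * c' i\<rfloor>)) - h (gv L r (\<lambda>i. \<lfloor>u * c i\<rfloor>))\<bar> \<le> D * (A * (u * E) powr \<sigma>)"
      unfolding f2 m_def .
    have "\<bar>FF L r c' u - FF L r c u\<bar> = \<bar>h (gv L r (\<lambda>i. \<lfloor>u * c' i\<rfloor>)) - h (gv L r (\<lambda>i. \<lfloor>u * c i\<rfloor>))\<bar> / u powr s"
      unfolding FF_def using u by (simp add: diff_divide_distrib[symmetric] abs_divide)
    also have "\<dots> \<le> D * (A * (u * E) powr \<sigma>) / u powr s" using hb u by (simp add: divide_right_mono)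
    also have "\<dots> = D * A * E powr \<sigma> * u powr (\<sigma> - s)" using u E1 by (simp add: powr_mult powr_diff)
    finally show ?thesis .
  qed
  have "LS (FF L r c') = LS (FF L r c)"
  proof (rule LS_eq[OF FF_evbdd FF_evbdd])
    fix e :: real assume e: "e > 0"
    show "eventually (\<lambda>u. \<bar>FF L r c' u - FF L r c u\<bar> \<le> e) at_top"
      using ev_powr_small[OF \<sigma>s e, of "D * A * E powr \<sigma>"] eventually_ge_at_top[of 1]
      by eventually_elim (use claim in fastforce)
  qed
  then show ?thesis unfolding Phi_def c'_def .
qed

end


context htx
begin

lemma Phi_lip:
  assumes N: "nrmR r c > 0"
  shows "\<exists>K\<ge>0. \<forall>c'. nrmR r (\<lambda>i. c' i - c i) \<le> nrmR r c / 4 \<longrightarrow>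
     \<bar>Phi L r c' - Phi L r c\<bar> \<le> K * nrmR r (\<lambda>i. c' i - c i)"
proof -
  obtain A where A: "A \<ge> 0" "\<And>p j k. j < r \<Longrightarrow> (k = 1 \<or> k = -1) \<Longrightarrow>
     \<bar>h (gv L r (p(j := p j + k))) - h (gv L r p)\<bar> \<le> A * (nrm r p + 1) powr (s - 1)"
    using step by blast
  define Nn where "Nn = nrmR r c"
  have Nn: "Nn > 0" using N unfolding Nn_def .
  define K where "K = A * 2 powr \<bar>s - 1\<bar> * Nn powr (s - 1)"
  have K0: "K \<ge> 0" unfolding K_def using A(1) by simp
  have main: "\<bar>FF L r c' u - FF L r c u\<bar> \<le> K * nrmR r (\<lambda>i. c' i - c i) + K * r * u powr (-1)"
    if dl: "nrmR r (\<lambda>i. c' i - c i) \<le> Nn / 4" and u: "u \<ge> 1" and uN: "u * Nn \<ge> 8 * real r + 4" for c' u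
  proof -
    define \<delta> where "\<delta> = nrmR r (\<lambda>i. c' i - c i)"
    have \<delta>0: "\<delta> \<ge> 0" unfolding \<delta>_def by (rule nrmR_ge0)
    define m where "m = (\<lambda>i. \<lfloor>u * c i\<rfloor>)"
    define d where "d = (\<lambda>i. \<lfloor>u * c' i\<rfloor> - \<lfloor>u * c i\<rfloor>)"
    have eqm: "(\<lambda>i. \<lfloor>u * c' i\<rfloor>) = (\<lambda>i. m i + d i)" unfolding m_def d_def by auto
    have nd: "nrm r d \<le> u * \<delta> + r"
    proof -
      have "nrm r d \<le> (\<Sum>i<r. u * \<bar>c' i - c i\<bar> + 1)"
        unfolding nrm_def d_def
      proof (rule sum_mono)
        fix i show "real_of_int \<bar>\<lfloor>u * c' i\<rfloor> - \<lfloor>u * c i\<rfloor>\<bar> \<le> u * \<bar>c' i - c i\<bar> + 1"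
          using floor_diff_bound[of u "c' i" "c i"] u by simp
      qed
      also have "\<dots> = u * \<delta> + r" unfolding \<delta>_def nrmR_def by (simp add: sum.distrib sum_distrib_left)
      finally show ?thesis .
    qed
    have mlo: "nrm r m \<ge> u * Nn - r" unfolding m_def Nn_def using u by (intro nrm_floor_lo) simp
    have mup: "nrm r m \<le> u * Nn + r" unfolding m_def Nn_def using u by (intro nrm_floor_up) simp
    have ud: "u * \<delta> \<le> u * Nn / 4" using dl u unfolding \<delta>_def by (simp add: mult_left_mono)
    have wt: "A * (nrm r q + 1) powr (s - 1) \<le> K * u powr (s - 1)"
      if q: "nrm r (\<lambda>i. q i - m i) \<le> nrm r d" for q
    proof -
      have r0: "real r \<ge> 0" by simp
      have lo: "nrm r q \<ge> nrm r m - nrm r (\<lambda>i. q i - m i)" by (rule nrm_tri_lo)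
      have up: "nrm r q \<le> nrm r m + nrm r (\<lambda>i. q i - m i)" by (rule nrm_tri_up)
      have x1: "u * Nn \<le> 2 * (nrm r q + 1)" using lo q nd mlo ud uN by argo
      have x2: "nrm r q + 1 \<le> 2 * (u * Nn)" using up q nd mup ud uN r0 by argo
      have xpos: "nrm r q + 1 > 0" using nrm_ge0[of r q] by linarith
      have "(nrm r q + 1) powr (s - 1) \<le> 2 powr \<bar>s - 1\<bar> * (u * Nn) powr (s - 1)"
        using xpos u Nn x1 x2 by (intro ratio_powr) auto
      also have "\<dots> = 2 powr \<bar>s - 1\<bar> * Nn powr (s - 1) * u powr (s - 1)"
        using u Nn by (simp add: powr_mult)
      finally have "A * (nrm r q + 1) powr (s - 1) \<le> A * (2 powr \<bar>s - 1\<bar> * Nn powr (s - 1) * u powr (s - 1))"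
        using A(1) by (intro mult_left_mono) auto
      then show ?thesis unfolding K_def by (simp add: mult.assoc)
    qed
    have "\<bar>h (gv L r (\<lambda>i. m i + d i)) - h (gv L r m)\<bar> \<le> nrm r d * (K * u powr (s - 1))"
      by (rule path[where p=m and d=d and c="K * u powr (s - 1)", OF A(2) wt])
    also have "\<dots> \<le> (u * \<delta> + r) * (K * u powr (s - 1))" using nd K0 by (intro mult_right_mono) auto
    finally have hb: "\<bar>h (gv L r (\<lambda>i. \<lfloor>u * c' i\<rfloor>)) - h (gv L r (\<lambda>i. \<lfloor>u * c i\<rfloor>))\<bar>
        \<le> (u * \<delta> + r) * (K * u powr (s - 1))"
      unfolding eqm m_def .
    have "\<bar>FF L r c' u - FF L r c u\<bar> = \<bar>h (gv L r (\<lambda>i. \<lfloor>u * c' i\<rfloor>)) - h (gv L r (\<lambda>i. \<lfloor>u * c i\<rfloor>))\<bar> / u powr s"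
      unfolding FF_def using u by (simp add: diff_divide_distrib[symmetric] abs_divide)
    also have "\<dots> \<le> (u * \<delta> + r) * (K * u powr (s - 1)) / u powr s" using hb u by (simp add: divide_right_mono)
    also have "u powr (s - 1) = u powr s / u" using u by (simp add: powr_diff)
    also have "(u * \<delta> + r) * (K * (u powr s / u)) / u powr s = K * \<delta> + K * r * u powr (-1)"
      using u by (simp add: powr_minus field_simps)
    finally show ?thesis unfolding \<delta>_def .
  qed
  have "\<bar>Phi L r c' - Phi L r c\<bar> \<le> K * nrmR r (\<lambda>i. c' i - c i)"
    if dl: "nrmR r (\<lambda>i. c' i - c i) \<le> nrmR r c / 4" for c'
    unfolding Phi_def
  proof (rule LS_close[OF FF_evbdd FF_evbdd])
    fix e :: real assume e: "e > 0"
    have m1: "(-1::real) < 0" by simp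
    show "eventually (\<lambda>u. \<bar>FF L r c' u - FF L r c u\<bar> \<le> K * nrmR r (\<lambda>i. c' i - c i) + e) at_top"
      using ev_powr_small[OF m1 e, of "K * r"] eventually_ge_at_top[of 1] eventually_ge_at_top[of "(8 * real r + 4) / Nn"]
    proof eventually_elim
      case (elim u)
      have "u * Nn \<ge> 8 * real r + 4" using elim(3) Nn by (simp add: pos_divide_le_eq)
      then have "\<bar>FF L r c' u - FF L r c u\<bar> \<le> K * nrmR r (\<lambda>i. c' i - c i) + K * r * u powr (-1)"
        using main[of c' u] dl elim(2) unfolding Nn_def by simp
      then show ?case using elim(1) by simp
    qed
  qed
  then show ?thesis using K0 by blast
qed

lemma Phi_cont:
  assumes lim: "\<And>i. i < r \<Longrightarrow> (\<lambda>n. cs n i) \<longlonglongrightarrow> c i"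
  shows "(\<lambda>n. Phi L r (cs n)) \<longlonglongrightarrow> Phi L r c"
proof -
  define \<delta> where "\<delta> n = nrmR r (\<lambda>i. cs n i - c i)" for n
  have \<delta>lim: "\<delta> \<longlonglongrightarrow> 0"
  proof -
    have "(\<lambda>n. \<Sum>i<r. \<bar>cs n i - c i\<bar>) \<longlonglongrightarrow> (\<Sum>i<r. \<bar>c i - c i\<bar>)"
      using lim by (intro tendsto_sum tendsto_rabs tendsto_diff tendsto_const) auto
    then show ?thesis unfolding \<delta>_def nrmR_def by simp
  qed
  show ?thesis
  proof (cases "nrmR r c > 0")
    case True
    obtain K where K: "K \<ge> 0" "\<And>c'. nrmR r (\<lambda>i. c' i - c i) \<le> nrmR r c / 4 \<Longrightarrow>
      \<bar>Phi L r c' - Phi L r c\<bar> \<le> K * nrmR r (\<lambda>i. c' i - c i)" using Phi_lip[OF True] by blast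
    have ev: "eventually (\<lambda>n. \<delta> n < nrmR r c / 4) sequentially"
      using \<delta>lim True by (intro order_tendstoD(2)) auto
    have "(\<lambda>n. Phi L r (cs n) - Phi L r c) \<longlonglongrightarrow> 0"
    proof (rule Lim_null_comparison)
      show "eventually (\<lambda>n. norm (Phi L r (cs n) - Phi L r c) \<le> K * \<delta> n) sequentially"
        using ev by eventually_elim (use K(2) in \<open>auto simp: \<delta>_def\<close>)
      show "(\<lambda>n. K * \<delta> n) \<longlonglongrightarrow> 0" using tendsto_mult[OF tendsto_const \<delta>lim, of K] by simp
    qed
    then show ?thesis by (simp add: LIM_zero_iff)
  next
    case False
    then have z: "nrmR r c = 0" using nrmR_ge0[of r c] by linarith
    then have c0: "\<And>i. i < r \<Longrightarrow> c i = 0" unfolding nrmR_def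
      by (subst (asm) sum_nonneg_eq_0_iff) auto
    have P0: "Phi L r c = 0" using Phi_zero[OF z] .
    have dn: "nrmR r (cs n) = \<delta> n" for n unfolding \<delta>_def nrmR_def by (intro sum.cong) (auto simp: c0)
    obtain B where B: "B \<ge> 0" "\<And>e c. e > 0 \<Longrightarrow> nrmR r c \<le> e \<Longrightarrow> \<bar>Phi L r c\<bar> \<le> B * (2 * e) powr s"
      using Phi_small by blast
    show ?thesis unfolding P0 tendsto_iff
    proof (intro allI impI)
      fix e :: real assume e: "e > 0"
      obtain d where d: "d > 0" "B * (2 * d) powr s < e" using small_powr[OF B(1) e s_pos] by blast
      have "eventually (\<lambda>n. \<delta> n < d) sequentially" using \<delta>lim d(1) by (intro order_tendstoD(2)) auto
      then show "eventually (\<lambda>n. dist (Phi L r (cs n)) 0 < e) sequentially"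
      proof eventually_elim
        case (elim n)
        have "\<bar>Phi L r (cs n)\<bar> \<le> B * (2 * d) powr s" using B(2)[OF d(1), of "cs n"] elim dn by simp
        then show ?case using d(2) by simp
      qed
    qed
  qed
qed

end


definition emb :: "nat \<Rightarrow> (nat \<Rightarrow> real) \<Rightarrow> (nat \<Rightarrow>\<^sub>0 real)" where
  "emb r t = Abs_poly_mapping (\<lambda>i. if i < r then t i else 0)"

lemma lookup_emb: "Poly_Mapping.lookup (emb r t) i = (if i < r then t i else 0)"
proof -
  have "finite {i. (if i < r then t i else 0) \<noteq> 0}"
    by (rule finite_subset[of _ "{..<r}"]) auto
  then show ?thesis unfolding emb_def by (simp add: lookup_Abs_poly_mapping)
qed

lemma lookup_scaleR_pm: "Poly_Mapping.lookup (c *\<^sub>R (x :: nat \<Rightarrow>\<^sub>0 real)) i = c * Poly_Mapping.lookup x i"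
proof -
  have "finite {i. c *\<^sub>R Poly_Mapping.lookup x i \<noteq> 0}"
    by (rule finite_subset[of _ "Poly_Mapping.keys x"]) (auto simp: in_keys_iff)
  then show ?thesis unfolding scaleR_poly_mapping_def by (simp add: lookup_Abs_poly_mapping)
qed

lemma emb_diff: "emb r (\<lambda>i. p i - q i) = emb r p - emb r q"
  by (rule poly_mapping_eqI) (simp add: lookup_emb lookup_minus)

lemma emb_sum_basis: "emb r d = (\<Sum>j<r. d j *\<^sub>R emb r (\<lambda>i. if i = j then 1 else 0))"
proof (rule poly_mapping_eqI)
  fix i
  show "Poly_Mapping.lookup (emb r d) i =
    Poly_Mapping.lookup (\<Sum>j<r. d j *\<^sub>R emb r (\<lambda>i. if i = j then 1 else 0)) i"
  proof -
    have "\<And>x. d x * (if i = x then 1 else 0) = (if i = x then d i else 0)" by simp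
    then show ?thesis by (simp add: lookup_sum lookup_scaleR_pm lookup_emb sum.delta)
  qed
qed

lemma gv_basis: "j < r \<Longrightarrow> gv L r (\<lambda>i. if i = j then 1 else 0) = L j"
  unfolding gv_def by (simp add: if_distrib[of "\<lambda>k. zmul k _"] cong: if_cong)

context htx
begin

lemma kernel_span:
  assumes dk: "(\<Sum>j<r. d j *\<^sub>R \<iota> (L j)) = 0"
  shows "\<exists>(T :: (nat \<Rightarrow>\<^sub>0 real) set) zf w. finite T \<and> (\<forall>v\<in>T. \<exists>k>0. zmul k (gv L r (zf v)) = 0) \<and>
     (\<forall>j<r. d j = (\<Sum>v\<in>T. w v * of_int (zf v j)))"
proof -
  define Zt where "Zt = {emb r (\<lambda>i. of_int (z i)) | z. \<exists>k>0. zmul k (gv L r z) = (0::'p)}"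
  have inspan: "emb r d \<in> span Zt"
  proof (rule ccontr)
    assume nin: "emb r d \<notin> span Zt"
    obtain B where B: "B \<subseteq> Zt" "independent B" "Zt \<subseteq> span B"
      by (rule maximal_independent_subset)
    have "span B \<subseteq> span Zt" using B(1) by (rule span_mono)
    then have ninB: "emb r d \<notin> span B" using nin by blast
    then have ninB': "emb r d \<notin> B" using span_base by blast
    have ind: "independent (insert (emb r d) B)" using B(2) ninB ninB' by (simp add: independent_insert)
    obtain \<mu> :: "(nat \<Rightarrow>\<^sub>0 real) \<Rightarrow> real" where mu: "linear \<mu>" "\<And>x. x \<in> insert (emb r d) B \<Longrightarrow> \<mu> x = (if x = emb r d then 1 else 0)"
      using linear_independent_extend[OF ind, of "\<lambda>x. if x = emb r d then (1::real) else 0"] by blast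
    have muB: "\<mu> x = 0" if "x \<in> span B" for x
      by (rule real_vector.linear_eq_0_on_span[OF mu(1) _ that]) (use mu(2) ninB' in auto)
    have muZ: "\<mu> x = 0" if "x \<in> Zt" for x using muB B(3) that by blast
    have mud: "\<mu> (emb r d) = 1" using mu(2) by simp
    have key: "\<mu> (emb r (\<lambda>i. of_int (p i))) = \<mu> (emb r (\<lambda>i. of_int (q i)))" if "gv L r p = gv L r q" for p q
    proof -
      have "gv L r (\<lambda>i. p i - q i) = 0"
        using that gv_add[of L r p "\<lambda>i. - q i"] gv_smul[of L r "-1" q] by (simp add: zmul_neg)
      then have "\<exists>z. emb r (\<lambda>i. of_int (p i - q i)) = emb r (\<lambda>i. of_int (z i)) \<and> (\<exists>k>0. zmul k (gv L r z) = 0)"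
        by (intro exI[of _ "\<lambda>i. p i - q i"] conjI refl exI[of _ "1::int"]) auto
      then have "emb r (\<lambda>i. of_int (p i - q i)) \<in> Zt" unfolding Zt_def mem_Collect_eq .
      then have "\<mu> (emb r (\<lambda>i. of_int (p i - q i))) = 0" by (rule muZ)
      then have "\<mu> (emb r (\<lambda>i. of_int (p i)) - emb r (\<lambda>i. of_int (q i))) = 0"
        by (simp add: emb_diff[symmetric])
      then show ?thesis by (simp add: linear_diff[OF mu(1)])
    qed
    define fA where "fA x = \<mu> (emb r (\<lambda>i. of_int ((SOME p. x = gv L r p) i)))" for x
    have fA: "fA (gv L r p) = \<mu> (emb r (\<lambda>i. of_int (p i)))" for p
    proof -
      have eqS: "gv L r p = gv L r (SOME q. gv L r p = gv L r q)" by (rule someI[of _ p]) simp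
      show ?thesis unfolding fA_def using key[OF eqS] by simp
    qed
    define A where "A = range (gv L r)"
    have A0: "0 \<in> A" unfolding A_def using gv_smul[of L r 0 "\<lambda>_. 0"] by (auto intro: range_eqI)
    have Aadd: "x + y \<in> A" if xy: "x \<in> A" "y \<in> A" for x y
    proof -
      obtain p q where "x = gv L r p" "y = gv L r q" using xy unfolding A_def by blast
      then have "x + y = gv L r (\<lambda>i. p i + q i)" by (simp add: gv_add)
      then show ?thesis unfolding A_def by simp
    qed
    have Aneg: "- x \<in> A" if xA: "x \<in> A" for x
    proof -
      obtain p where "x = gv L r p" using xA unfolding A_def by blast
      then have "- x = gv L r (\<lambda>i. (-1) * p i)" by (simp only: gv_smul zmul_neg zmul_1)
      then show ?thesis unfolding A_def by simp
    qed
    have fadd: "fA (x + y) = fA x + fA y" if xy: "x \<in> A" "y \<in> A" for x y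
    proof -
      obtain p q where pq: "x = gv L r p" "y = gv L r q" using xy unfolding A_def by blast
      have "fA (x + y) = fA (gv L r (\<lambda>i. p i + q i))" by (simp add: pq gv_add)
      also have "\<dots> = \<mu> (emb r (\<lambda>i. of_int (p i)) + emb r (\<lambda>i. of_int (q i)))"
      proof -
        have "emb r (\<lambda>i. of_int (p i + q i)) = emb r (\<lambda>i. of_int (p i)) + emb r (\<lambda>i. of_int (q i))"
          by (rule poly_mapping_eqI) (simp add: lookup_emb lookup_add)
        then show ?thesis using fA by simp
      qed
      also have "\<dots> = fA x + fA y" using pq fA linear_add[OF mu(1)] by simp
      finally show ?thesis .
    qed
    obtain F where F: "\<And>x y. F (x + y) = F x + F y" "\<And>x. x \<in> A \<Longrightarrow> F x = fA x"
      using additive_extension[of A fA, OF A0 Aadd Aneg fadd] by blast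
    have tf: "\<forall>f::'p \<Rightarrow> real. (\<forall>a b. f (a + b) = f a + f b) \<longrightarrow> (\<exists>g. linear g \<and> (\<forall>p. g (\<iota> p) = f p))"
      using tensor unfolding real_tensor_def by (elim conjE) assumption
    have "\<exists>g. linear g \<and> (\<forall>p. g (\<iota> p) = F p)"
      by (rule tf[rule_format]) (use F(1) in blast)
    then obtain g where g: "linear g" "\<And>p. g (\<iota> p) = F p" by blast
    have FL: "F (L j) = \<mu> (emb r (\<lambda>i. if i = j then 1 else 0))" if "j < r" for j
    proof -
      have "F (L j) = F (gv L r (\<lambda>i. if i = j then 1 else 0))" by (subst gv_basis[OF that]) (rule refl)
      also have "\<dots> = fA (gv L r (\<lambda>i. if i = j then 1 else 0))" by (rule F(2)) (simp add: A_def)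
      also have "\<dots> = \<mu> (emb r (\<lambda>i. of_int (if i = j then 1 else 0)))" by (rule fA)
      finally show ?thesis by (simp add: if_distrib cong: if_cong)
    qed
    have "0 = g (\<Sum>j<r. d j *\<^sub>R \<iota> (L j))" using dk linear_0[OF g(1)] by simp
    also have "\<dots> = (\<Sum>j<r. d j * F (L j))" using g by (simp add: linear_sum linear_scale)
    also have "\<dots> = (\<Sum>j<r. d j * \<mu> (emb r (\<lambda>i. if i = j then 1 else 0)))" using FL by simp
    also have "\<dots> = \<mu> (\<Sum>j<r. d j *\<^sub>R emb r (\<lambda>i. if i = j then 1 else 0))"
      using mu(1) by (simp add: linear_sum linear_scale)
    also have "\<dots> = 1" using mud emb_sum_basis[of r d] by simp
    finally show False by simp
  qed
  have "\<exists>T w. emb r d = (\<Sum>v\<in>T. w v *\<^sub>R v) \<and> finite T \<and> T \<subseteq> Zt"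
    using inspan unfolding span_explicit mem_Collect_eq .
  then obtain T w where T: "finite T" "T \<subseteq> Zt" "(\<Sum>v\<in>T. w v *\<^sub>R v) = emb r d"
    by (elim exE conjE) (rule that, simp_all)
  have "\<forall>v\<in>T. \<exists>z. v = emb r (\<lambda>i. of_int (z i)) \<and> (\<exists>k>0. zmul k (gv L r z) = 0)"
  proof
    fix v assume "v \<in> T"
    then have "v \<in> Zt" using T(2) by blast
    then show "\<exists>z. v = emb r (\<lambda>i. of_int (z i)) \<and> (\<exists>k>0. zmul k (gv L r z) = 0)"
      unfolding Zt_def mem_Collect_eq .
  qed
  then obtain zf where zf: "\<forall>v\<in>T. v = emb r (\<lambda>i. of_int (zf v i)) \<and> (\<exists>k>0. zmul k (gv L r (zf v)) = 0)"
    by (rule bchoice[elim_format]) blast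
  have "d j = (\<Sum>v\<in>T. w v * of_int (zf v j))" if "j < r" for j
  proof -
    have "d j = Poly_Mapping.lookup (emb r d) j" using that by (simp add: lookup_emb)
    also have "\<dots> = (\<Sum>v\<in>T. w v * Poly_Mapping.lookup v j)"
      unfolding T(3)[symmetric] by (simp add: lookup_sum lookup_scaleR_pm)
    also have "\<dots> = (\<Sum>v\<in>T. w v * of_int (zf v j))"
    proof (rule sum.cong)
      fix v assume "v \<in> T"
      then have ev: "v = emb r (\<lambda>i. of_int (zf v i))" using zf by blast
      have "Poly_Mapping.lookup v j = Poly_Mapping.lookup (emb r (\<lambda>i. of_int (zf v i))) j"
        using ev by (rule arg_cong)
      also have "\<dots> = of_int (zf v j)" using that by (simp add: lookup_emb)
      finally have "Poly_Mapping.lookup v j = of_int (zf v j)" .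
      then show "w v * Poly_Mapping.lookup v j = w v * of_int (zf v j)" by simp
    qed simp
    finally show ?thesis .
  qed
  then show ?thesis using T(1) zf by blast
qed

end


lemma floor_approx: "(\<lambda>n. of_int \<lfloor>real (Suc n) * x\<rfloor> / real (Suc n)) \<longlonglongrightarrow> x"
proof -
  have "(\<lambda>n. of_int \<lfloor>real (Suc n) * x\<rfloor> / real (Suc n) - x) \<longlonglongrightarrow> 0"
  proof (rule Lim_null_comparison)
    show "eventually (\<lambda>n. norm (of_int \<lfloor>real (Suc n) * x\<rfloor> / real (Suc n) - x) \<le> inverse (real (Suc n))) sequentially"
    proof (intro always_eventually allI)
      fix n
      have np: "real (Suc n) > 0" by simp
      have a: "real_of_int \<lfloor>real (Suc n) * x\<rfloor> \<le> real (Suc n) * x" by (rule of_int_floor_le)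
      have b: "real (Suc n) * x < real_of_int \<lfloor>real (Suc n) * x\<rfloor> + 1" by linarith
      define F where "F = real_of_int \<lfloor>real (Suc n) * x\<rfloor>"
      define N where "N = real (Suc n)"
      have Np: "N > 0" unfolding N_def by simp
      have eq: "F / N - x = (F - N * x) / N" using Np by (simp add: diff_divide_distrib)
      have ab: "\<bar>F - N * x\<bar> \<le> 1" using a b unfolding F_def N_def by linarith
      have "norm (F / N - x) = \<bar>F - N * x\<bar> / N" unfolding eq using Np by (simp add: abs_divide)
      also have "\<dots> \<le> 1 / N" using ab Np by (intro divide_right_mono) auto
      finally show "norm (of_int \<lfloor>real (Suc n) * x\<rfloor> / real (Suc n) - x) \<le> inverse (real (Suc n))"
        unfolding F_def N_def by (simp add: inverse_eq_divide)
    qed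
    show "(\<lambda>n. inverse (real (Suc n))) \<longlonglongrightarrow> 0" by (rule LIMSEQ_inverse_real_of_nat)
  qed
  then show ?thesis by (simp add: LIM_zero_iff)
qed

lemma sum_concat: "(\<Sum>j<(ra::nat) + rb. (if j < ra then f j else g (j - ra))) = (\<Sum>j<ra. f j) + (\<Sum>j<rb. g j)"
proof (induction rb)
  case 0
  have "(\<Sum>j<ra + 0. (if j < ra then f j else g (j - ra))) = (\<Sum>j<ra. f j)" by (intro sum.cong) auto
  then show ?case by simp
next
  case (Suc rb)
  have "(\<Sum>j<ra + Suc rb. (if j < ra then f j else g (j - ra))) =
    (\<Sum>j<ra + rb. (if j < ra then f j else g (j - ra))) + g rb"
    by simp
  then show ?case using Suc by (simp add: add.assoc)
qed

lemma sum_concat_l: "(\<Sum>j<(ra::nat) + rb. (if j < ra then f j else 0)) = (\<Sum>j<ra. f j)"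
  using sum_concat[where ra=ra and rb=rb and f=f and g="\<lambda>_. 0"] by simp

lemma sum_concat_r: "(\<Sum>j<(ra::nat) + rb. (if j < ra then 0 else g (j - ra))) = (\<Sum>j<rb. g j)"
  using sum_concat[where ra=ra and rb=rb and g=g and f="\<lambda>_. 0"] by simp

context htx
begin

lemma RI_sum:
  assumes T: "finite T" and tz: "\<forall>v\<in>T. \<exists>k>0. zmul k (gv L r (zf v)) = 0" and b: "b > 0"
  shows "Phi L r (\<lambda>i. c i + (\<Sum>v\<in>T. of_int (a v) / of_int b * of_int (zf v i))) = Phi L r c"
  using T tz
proof (induction T arbitrary: c rule: finite_induct)
  case empty then show ?case by simp
next
  case (insert v T)
  obtain k where k: "k > 0" "zmul k (gv L r (zf v)) = 0" using insert(4) by blast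
  have "(\<lambda>i. c i + (\<Sum>v\<in>insert v T. of_int (a v) / of_int b * of_int (zf v i))) =
     (\<lambda>i. (c i + (\<Sum>v\<in>T. of_int (a v) / of_int b * of_int (zf v i))) + of_int (a v) / of_int b * of_int (zf v i))"
    using insert(1,2) by (simp add: algebra_simps)
  then have "Phi L r (\<lambda>i. c i + (\<Sum>v\<in>insert v T. of_int (a v) / of_int b * of_int (zf v i))) =
     Phi L r (\<lambda>i. c i + (\<Sum>v\<in>T. of_int (a v) / of_int b * of_int (zf v i)))"
    using Phi_rat_inv[OF k(2) k(1) b] by simp
  also have "\<dots> = Phi L r c" using insert by simp
  finally show ?case .
qed

lemma SFI:
  assumes eq: "(\<Sum>j<r. c j *\<^sub>R \<iota> (L j)) = (\<Sum>j<r. c' j *\<^sub>R \<iota> (L j))"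
  shows "Phi L r c = Phi L r c'"
proof -
  define d where "d j = c' j - c j" for j
  have dk: "(\<Sum>j<r. d j *\<^sub>R \<iota> (L j)) = 0"
    using eq unfolding d_def by (simp add: scaleR_diff_left sum_subtractf)
  obtain T :: "(nat \<Rightarrow>\<^sub>0 real) set" and zf w where T: "finite T" "\<forall>v\<in>T. \<exists>k>0. zmul k (gv L r (zf v)) = 0"
    "\<forall>j<r. d j = (\<Sum>v\<in>T. w v * of_int (zf v j))"
    using kernel_span[OF dk] by blast
  define cs where "cs n = (\<lambda>i. c i + (\<Sum>v\<in>T. of_int \<lfloor>real (Suc n) * w v\<rfloor> / of_int (int (Suc n)) * of_int (zf v i)))" for n
  have const: "Phi L r (cs n) = Phi L r c" for n
    unfolding cs_def by (rule RI_sum[OF T(1) T(2)]) simp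
  have lim: "(\<lambda>n. Phi L r (cs n)) \<longlonglongrightarrow> Phi L r c'"
  proof (rule Phi_cont)
    fix i assume i: "i < r"
    have "(\<lambda>n. cs n i) \<longlonglongrightarrow> c i + (\<Sum>v\<in>T. w v * of_int (zf v i))"
      unfolding cs_def using floor_approx
      by (intro tendsto_add tendsto_const tendsto_sum tendsto_mult) simp_all
    also have "c i + (\<Sum>v\<in>T. w v * of_int (zf v i)) = c' i"
    proof -
      have "d i = (\<Sum>v\<in>T. w v * of_int (zf v i))" using T(3) i by blast
      then show ?thesis unfolding d_def by linarith
    qed
    finally show "(\<lambda>n. cs n i) \<longlonglongrightarrow> c' i" .
  qed
  then have "(\<lambda>n. Phi L r c) \<longlonglongrightarrow> Phi L r c'" using const by simp
  then show ?thesis using LIMSEQ_unique[OF tendsto_const] by blast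
qed

lemma FF_concat1:
  "FF (\<lambda>j. if j < ra then L1 j else L2 (j - ra)) (ra + rb) (\<lambda>j. if j < ra then c1 j else 0) = FF L1 ra c1"
proof -
  have "gv (\<lambda>j. if j < ra then L1 j else L2 (j - ra)) (ra + rb) (\<lambda>i. \<lfloor>u * (if i < ra then c1 i else 0)\<rfloor>) = gv L1 ra (\<lambda>i. \<lfloor>u * c1 i\<rfloor>)" for u
  proof -
    have "gv (\<lambda>j. if j < ra then L1 j else L2 (j - ra)) (ra + rb) (\<lambda>i. \<lfloor>u * (if i < ra then c1 i else 0)\<rfloor>)
      = (\<Sum>j<ra + rb. (if j < ra then zmul \<lfloor>u * c1 j\<rfloor> (L1 j) else 0))"
      unfolding gv_def by (intro sum.cong) auto
    also have "\<dots> = gv L1 ra (\<lambda>i. \<lfloor>u * c1 i\<rfloor>)"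
      using sum_concat_l[where ra=ra and rb=rb and f="\<lambda>j. zmul \<lfloor>u * c1 j\<rfloor> (L1 j)"] unfolding gv_def by simp
    finally show ?thesis .
  qed
  then show ?thesis unfolding FF_def by presburger
qed

lemma FF_concat2:
  "FF (\<lambda>j. if j < ra then L1 j else L2 (j - ra)) (ra + rb) (\<lambda>j. if j < ra then 0 else c2 (j - ra)) = FF L2 rb c2"
proof -
  have "gv (\<lambda>j. if j < ra then L1 j else L2 (j - ra)) (ra + rb) (\<lambda>i. \<lfloor>u * (if i < ra then 0 else c2 (i - ra))\<rfloor>) = gv L2 rb (\<lambda>i. \<lfloor>u * c2 i\<rfloor>)" for u
  proof -
    have "gv (\<lambda>j. if j < ra then L1 j else L2 (j - ra)) (ra + rb) (\<lambda>i. \<lfloor>u * (if i < ra then 0 else c2 (i - ra))\<rfloor>)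
      = (\<Sum>j<ra + rb. (if j < ra then 0 else (\<lambda>j. zmul \<lfloor>u * c2 j\<rfloor> (L2 j)) (j - ra)))"
      unfolding gv_def by (intro sum.cong) auto
    also have "\<dots> = gv L2 rb (\<lambda>i. \<lfloor>u * c2 i\<rfloor>)"
      using sum_concat_r[where ra=ra and rb=rb and g="\<lambda>j. zmul \<lfloor>u * c2 j\<rfloor> (L2 j)"] unfolding gv_def by simp
    finally show ?thesis .
  qed
  then show ?thesis unfolding FF_def by presburger
qed

lemma IND:
  assumes eq: "(\<Sum>j<ra. c1 j *\<^sub>R \<iota> (L1 j)) = (\<Sum>j<rb. c2 j *\<^sub>R \<iota> (L2 j))"
  shows "Phi L1 ra c1 = Phi L2 rb c2"
proof -
  define LL where "LL = (\<lambda>j. if j < ra then L1 j else L2 (j - ra))"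
  define C1 where "C1 = (\<lambda>j. if j < ra then c1 j else 0)"
  define C2 where "C2 = (\<lambda>j. if j < ra then 0 else c2 (j - ra))"
  have s1: "(\<Sum>j<ra + rb. C1 j *\<^sub>R \<iota> (LL j)) = (\<Sum>j<ra. c1 j *\<^sub>R \<iota> (L1 j))"
  proof -
    have "(\<Sum>j<ra + rb. C1 j *\<^sub>R \<iota> (LL j)) = (\<Sum>j<ra + rb. (if j < ra then c1 j *\<^sub>R \<iota> (L1 j) else 0))"
      unfolding C1_def LL_def by (intro sum.cong) auto
    then show ?thesis using sum_concat_l[where ra=ra and rb=rb and f="\<lambda>j. c1 j *\<^sub>R \<iota> (L1 j)"] by simp
  qed
  have s2: "(\<Sum>j<ra + rb. C2 j *\<^sub>R \<iota> (LL j)) = (\<Sum>j<rb. c2 j *\<^sub>R \<iota> (L2 j))"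
  proof -
    have "(\<Sum>j<ra + rb. C2 j *\<^sub>R \<iota> (LL j)) = (\<Sum>j<ra + rb. (if j < ra then 0 else (\<lambda>j. c2 j *\<^sub>R \<iota> (L2 j)) (j - ra)))"
      unfolding C2_def LL_def by (intro sum.cong) auto
    then show ?thesis using sum_concat_r[where ra=ra and rb=rb and g="\<lambda>j. c2 j *\<^sub>R \<iota> (L2 j)"] by simp
  qed
  have "Phi LL (ra + rb) C1 = Phi LL (ra + rb) C2" using s1 s2 eq by (intro SFI) simp
  moreover have "Phi LL (ra + rb) C1 = Phi L1 ra c1" unfolding Phi_def LL_def C1_def FF_concat1 ..
  moreover have "Phi LL (ra + rb) C2 = Phi L2 rb c2" unfolding Phi_def LL_def C2_def FF_concat2 ..
  ultimately show ?thesis by simp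
qed

definition rep :: "'v \<Rightarrow> nat \<times> (nat \<Rightarrow> 'p) \<times> (nat \<Rightarrow> real)" where
  "rep M = (SOME x. case x of (r, L, c) \<Rightarrow> M = (\<Sum>j<r. c j *\<^sub>R \<iota> (L j)))"

definition Hh :: "'v \<Rightarrow> real" where
  "Hh M = (case rep M of (r, L, c) \<Rightarrow> Phi L r c)"

lemma Hh_eq: "Hh (\<Sum>j<r. c j *\<^sub>R \<iota> (L j)) = Phi L r c"
proof -
  define M where "M = (\<Sum>j<r. c j *\<^sub>R \<iota> (L j))"
  have ex: "\<exists>x::nat \<times> (nat \<Rightarrow> 'p) \<times> (nat \<Rightarrow> real). case x of (r, L, c) \<Rightarrow> M = (\<Sum>j<r. c j *\<^sub>R \<iota> (L j))"
    by (rule exI[of _ "(r, L, c)"]) (simp add: M_def)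
  obtain r' L' c' where rp: "rep M = (r', L', c')" by (cases "rep M") auto
  have "case rep M of (r, L, c) \<Rightarrow> M = (\<Sum>j<r. c j *\<^sub>R \<iota> (L j))"
    unfolding rep_def by (rule someI_ex[OF ex])
  then have "M = (\<Sum>j<r'. c' j *\<^sub>R \<iota> (L' j))" using rp by simp
  then have "Phi L' r' c' = Phi L r c" by (intro IND) (simp add: M_def)
  then show ?thesis unfolding Hh_def M_def[symmetric] using rp by simp
qed

end


context htx
begin

lemma iota_add: "\<iota> (a + b) = \<iota> a + \<iota> b"
  using tensor unfolding real_tensor_def by blast

lemma iota_zmul: "\<iota> (zmul k x) = of_int k *\<^sub>R \<iota> x"
  by (rule additive_zmul_vec) (rule iota_add)

lemma iota_0: "\<iota> 0 = 0"
  using iota_add[of 0 0] by simp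

lemma iota_sum: "\<iota> (\<Sum>i<(r::nat). f i) = (\<Sum>i<r. \<iota> (f i))"
  by (induction r) (simp_all add: iota_0 iota_add)

lemma iota_gv: "\<iota> (gv L r p) = (\<Sum>j<r. of_int (p j) *\<^sub>R \<iota> (L j))"
  unfolding gv_def iota_sum iota_zmul ..

lemma span_rep: "\<exists>(r::nat) L c. M = (\<Sum>j<r. c j *\<^sub>R \<iota> (L j))"
proof -
  have "M \<in> span (range \<iota>)" using tensor unfolding real_tensor_def by simp
  then have "\<exists>T u. M = (\<Sum>v\<in>T. u v *\<^sub>R v) \<and> finite T \<and> T \<subseteq> range \<iota>"
    unfolding span_explicit mem_Collect_eq .
  then obtain T u where T: "M = (\<Sum>v\<in>T. u v *\<^sub>R v)" "finite T" "T \<subseteq> range \<iota>"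
    by (elim exE conjE) (rule that, simp_all)
  obtain f where f: "bij_betw f {0..<card T} T" using ex_bij_betw_nat_finite[OF T(2)] by blast
  have "M = (\<Sum>j\<in>{0..<card T}. u (f j) *\<^sub>R f j)"
    unfolding T(1) by (rule sum.reindex_bij_betw[OF f, symmetric])
  also have "\<dots> = (\<Sum>j<card T. u (f j) *\<^sub>R \<iota> (inv \<iota> (f j)))"
  proof (rule sum.cong)
    fix j assume "j \<in> {..<card T}"
    then have "f j \<in> T" using f unfolding bij_betw_def by auto
    then have "f j \<in> range \<iota>" using T(3) by blast
    then show "u (f j) *\<^sub>R f j = u (f j) *\<^sub>R \<iota> (inv \<iota> (f j))" by (simp add: f_inv_into_f)
  qed (simp add: atLeast0LessThan)
  finally have eqM: "M = (\<Sum>j<card T. u (f j) *\<^sub>R \<iota> (inv \<iota> (f j)))" .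
  show ?thesis
    by (rule exI[of _ "card T"], rule exI[of _ "\<lambda>j. inv \<iota> (f j)"], rule exI[of _ "\<lambda>j. u (f j)"])
      (simp add: eqM)
qed

lemma fam_rep: "\<exists>(r::nat) L a. \<forall>i<(k::nat). M i = (\<Sum>j<r. a i j *\<^sub>R \<iota> (L j))"
proof (induction k)
  case 0 then show ?case by simp
next
  case (Suc k)
  obtain ra :: nat and La a where IH: "\<forall>i<k. M i = (\<Sum>j<ra. a i j *\<^sub>R \<iota> (La j))" using Suc by blast
  obtain rb :: nat and Lb cb where R: "M k = (\<Sum>j<rb. cb j *\<^sub>R \<iota> (Lb j))" using span_rep by blast
  define LL where "LL = (\<lambda>j. if j < ra then La j else Lb (j - ra))"
  define A where "A = (\<lambda>i j. if i < k then (if j < ra then a i j else 0) else (if j < ra then 0 else cb (j - ra)))"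
  have "M i = (\<Sum>j<ra + rb. A i j *\<^sub>R \<iota> (LL j))" if i: "i < Suc k" for i
  proof (cases "i < k")
    case True
    have "(\<Sum>j<ra + rb. A i j *\<^sub>R \<iota> (LL j)) = (\<Sum>j<ra + rb. (if j < ra then a i j *\<^sub>R \<iota> (La j) else 0))"
      unfolding A_def LL_def using True by (intro sum.cong) auto
    also have "\<dots> = (\<Sum>j<ra. a i j *\<^sub>R \<iota> (La j))"
      using sum_concat_l[where ra=ra and rb=rb and f="\<lambda>j. a i j *\<^sub>R \<iota> (La j)"] by simp
    finally show ?thesis using IH True by simp
  next
    case False
    then have ik: "i = k" using i by simp
    have "(\<Sum>j<ra + rb. A i j *\<^sub>R \<iota> (LL j)) = (\<Sum>j<ra + rb. (if j < ra then 0 else (\<lambda>j. cb j *\<^sub>R \<iota> (Lb j)) (j - ra)))"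
      unfolding A_def LL_def using ik by (intro sum.cong) auto
    also have "\<dots> = (\<Sum>j<rb. cb j *\<^sub>R \<iota> (Lb j))"
      using sum_concat_r[where ra=ra and rb=rb and g="\<lambda>j. cb j *\<^sub>R \<iota> (Lb j)"] by simp
    finally show ?thesis using R ik by simp
  qed
  then show ?case by blast
qed

lemma Hh_scale: "t \<ge> 0 \<Longrightarrow> Hh (t *\<^sub>R M) = t powr s * Hh M"
proof -
  assume t: "t \<ge> 0"
  obtain r :: nat and L c where M: "M = (\<Sum>j<r. c j *\<^sub>R \<iota> (L j))" using span_rep by blast
  have tM: "t *\<^sub>R M = (\<Sum>j<r. (t * c j) *\<^sub>R \<iota> (L j))" unfolding M by (simp add: scaleR_sum_right)
  have H1: "Hh (t *\<^sub>R M) = Phi L r (\<lambda>j. t * c j)" unfolding tM by (rule Hh_eq)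
  have H2: "Hh M = Phi L r c" unfolding M by (rule Hh_eq)
  show ?thesis
  proof (cases "t = 0")
    case True
    have "Phi L r (\<lambda>j. t * c j) = 0" using True by (intro Phi_zero) (simp add: nrmR_def)
    then show ?thesis unfolding H1 using True by simp
  next
    case False
    then have "t > 0" using t by simp
    then show ?thesis unfolding H1 H2 by (rule Phi_scale)
  qed
qed

lemma Hh_cont: "fin_dim_continuous Hh"
  unfolding fin_dim_continuous_def
proof (intro allI impI)
  fix k and M :: "nat \<Rightarrow> 'v" and t :: "nat \<Rightarrow> real" and T :: "nat \<Rightarrow> nat \<Rightarrow> real"
  assume lim: "\<forall>i<k. (\<lambda>n. T n i) \<longlonglongrightarrow> t i"
  obtain r :: nat and L a where rep: "\<forall>i<k. M i = (\<Sum>j<r. a i j *\<^sub>R \<iota> (L j))" using fam_rep by blast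
  have conv: "(\<Sum>i<k. x i *\<^sub>R M i) = (\<Sum>j<r. (\<Sum>i<k. x i * a i j) *\<^sub>R \<iota> (L j))" for x
  proof -
    have "(\<Sum>i<k. x i *\<^sub>R M i) = (\<Sum>i<k. \<Sum>j<r. (x i * a i j) *\<^sub>R \<iota> (L j))"
      using rep by (intro sum.cong) (auto simp: scaleR_sum_right)
    also have "\<dots> = (\<Sum>j<r. \<Sum>i<k. (x i * a i j) *\<^sub>R \<iota> (L j))" by (rule sum.swap)
    also have "\<dots> = (\<Sum>j<r. (\<Sum>i<k. x i * a i j) *\<^sub>R \<iota> (L j))" by (simp add: scaleR_sum_left)
    finally show ?thesis .
  qed
  have "(\<lambda>n. Phi L r (\<lambda>j. \<Sum>i<k. T n i * a i j)) \<longlonglongrightarrow> Phi L r (\<lambda>j. \<Sum>i<k. t i * a i j)"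
  proof (rule Phi_cont)
    fix j show "(\<lambda>n. \<Sum>i<k. T n i * a i j) \<longlonglongrightarrow> (\<Sum>i<k. t i * a i j)"
      using lim by (intro tendsto_sum tendsto_mult tendsto_const) auto
  qed
  then show "(\<lambda>n. Hh (\<Sum>i<k. T n i *\<^sub>R M i)) \<longlonglongrightarrow> Hh (\<Sum>i<k. t i *\<^sub>R M i)"
    unfolding conv Hh_eq .
qed

end


context htx
begin

lemma Hh_iota: "ereal (Hh (\<iota> L)) = limsup (\<lambda>m::nat. ereal (h (zmul (int m) L) / real m powr s))"
proof -
  have e: "\<iota> L = (\<Sum>j<(1::nat). (\<lambda>_. 1::real) j *\<^sub>R \<iota> ((\<lambda>_. L) j))" by simp
  have HP: "Hh (\<iota> L) = Phi (\<lambda>_. L) 1 (\<lambda>_. 1)" by (subst e) (rule Hh_eq)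
  define a where "a n = h (zmul (int n) L) / real n powr s" for n :: nat
  obtain B where B: "B \<ge> 0" "\<And>p. \<bar>h (gv (\<lambda>_. L) 1 p)\<bar> \<le> B * (nrm 1 p + 1) powr s"
    using growth_bound by blast
  have hb: "\<bar>h (zmul k L)\<bar> \<le> B * (real_of_int \<bar>k\<bar> + 1) powr s" for k
    using B(2)[of "\<lambda>_. k"] by (simp add: gv_def nrm_def)
  have ab: "\<bar>a n\<bar> \<le> B * 2 powr s" for n
  proof (cases "n = 0")
    case True then show ?thesis using B(1) unfolding a_def by simp
  next
    case False
    then have n1: "real n \<ge> 1" by simp
    have "\<bar>h (zmul (int n) L)\<bar> \<le> B * (real n + 1) powr s" using hb[of "int n"] by simp
    also have "\<dots> \<le> B * (2 * real n) powr s" using n1 B(1) s_pos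
      by (intro mult_left_mono powr_mono2) auto
    also have "\<dots> = B * 2 powr s * real n powr s" using n1 by (simp add: powr_mult)
    finally have "\<bar>h (zmul (int n) L)\<bar> / real n powr s \<le> B * 2 powr s"
      using n1 by (simp add: pos_divide_le_eq)
    then show ?thesis unfolding a_def using n1 by (simp add: abs_divide)
  qed
  have FFe: "FF (\<lambda>_. L) 1 (\<lambda>_. 1) u = h (zmul \<lfloor>u\<rfloor> L) / u powr s" for u
    unfolding FF_def gv_def by simp
  have close: "\<bar>FF (\<lambda>_. L) 1 (\<lambda>_. 1) u - a (nat \<lfloor>u\<rfloor>)\<bar> \<le> B * 2 powr s * (1 - (1 - inverse u) powr s)"
    if u: "u \<ge> 1" for u
  proof -
    define n where "n = nat \<lfloor>u\<rfloor>"
    have nf: "int n = \<lfloor>u\<rfloor>" unfolding n_def using u by simp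
    have rn: "real n = real_of_int \<lfloor>u\<rfloor>" using nf by (metis of_int_of_nat_eq)
    have fl1: "real_of_int \<lfloor>u\<rfloor> \<le> u" by (rule of_int_floor_le)
    have fl2: "u < real_of_int \<lfloor>u\<rfloor> + 1" by (rule real_of_int_floor_add_one_gt)
    have fl3: "\<lfloor>u\<rfloor> \<ge> 1" using u by (simp add: le_floor_iff)
    then have fl4: "real_of_int \<lfloor>u\<rfloor> \<ge> 1" by simp
    have n1a: "real n \<ge> 1" using rn fl4 by linarith
    have n1b: "real n \<le> u" using rn fl1 by linarith
    have n1c: "real n \<ge> u - 1" using rn fl2 by linarith
    note n1 = n1a n1b n1c
    have up: "u powr s > 0" "real n powr s > 0" using u n1 by auto
    have "FF (\<lambda>_. L) 1 (\<lambda>_. 1) u - a n = a n * ((real n / u) powr s - 1)"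
      unfolding FFe a_def nf[symmetric] using up u n1 by (simp add: powr_divide field_simps)
    moreover have q1: "(real n / u) powr s \<le> 1" using n1 u s_pos by (intro powr_le1) auto
    moreover have q2: "(1 - inverse u) powr s \<le> (real n / u) powr s"
    proof (rule powr_mono2)
      show "0 \<le> 1 - inverse u" using u by (simp add: field_simps)
      have "1 - inverse u = (u - 1) / u" using u by (simp add: field_simps)
      also have "\<dots> \<le> real n / u" using n1 u by (intro divide_right_mono) auto
      finally show "1 - inverse u \<le> real n / u" .
    qed (use s_pos in auto)
    ultimately have "\<bar>FF (\<lambda>_. L) 1 (\<lambda>_. 1) u - a n\<bar> = \<bar>a n\<bar> * (1 - (real n / u) powr s)"
      by (simp add: abs_mult)
    also have "\<dots> \<le> B * 2 powr s * (1 - (1 - inverse u) powr s)"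
      using ab[of n] q1 q2 by (intro mult_mono) auto
    finally show ?thesis unfolding n_def .
  qed
  have lim0: "((\<lambda>x::real. 1 - inverse x) \<longlongrightarrow> 1 - 0) at_top"
    by (intro tendsto_diff tendsto_const tendsto_inverse_0_at_top filterlim_ident)
  have lim1: "((\<lambda>u::real. (1 - inverse u) powr s) \<longlongrightarrow> 1 powr s) at_top"
    using lim0 by (intro tendsto_powr tendsto_const) auto
  have lim2: "((\<lambda>u::real. B * 2 powr s * (1 - (1 - inverse u) powr s)) \<longlongrightarrow> B * 2 powr s * (1 - 1)) at_top"
    using lim1 by (intro tendsto_mult tendsto_diff tendsto_const) auto
  have bdd2: "evbdd (\<lambda>u. a (nat \<lfloor>u\<rfloor>))" unfolding evbdd_def using ab by (intro exI[of _ "B * 2 powr s"]) simp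
  have "LS (FF (\<lambda>_. L) 1 (\<lambda>_. 1)) = LS (\<lambda>u. a (nat \<lfloor>u\<rfloor>))"
  proof (rule LS_eq[OF FF_evbdd bdd2])
    fix e :: real assume e: "e > 0"
    have "eventually (\<lambda>u::real. B * 2 powr s * (1 - (1 - inverse u) powr s) < e) at_top"
      using lim2 e by (intro order_tendstoD(2)) auto
    then show "eventually (\<lambda>u. \<bar>FF (\<lambda>_. L) 1 (\<lambda>_. 1) u - a (nat \<lfloor>u\<rfloor>)\<bar> \<le> e) at_top"
      using eventually_ge_at_top[of "1::real"]
      by eventually_elim (use close in fastforce)
  qed
  then have "ereal (Hh (\<iota> L)) = ereal (LS (\<lambda>u. a (nat \<lfloor>u\<rfloor>)))" unfolding HP Phi_def by simp
  also have "\<dots> = limsup (\<lambda>n. ereal (a n))" by (rule LS_nat[OF ab])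
  finally show ?thesis unfolding a_def .
qed

lemma uniq:
  assumes P1: "\<forall>L. ereal (H (\<iota> L)) = limsup (\<lambda>m::nat. ereal (h (zmul (int m) L) / real m powr s))"
    and P2: "\<forall>t M. t \<ge> 0 \<longrightarrow> H (t *\<^sub>R M) = t powr s * H M"
    and P3: "fin_dim_continuous H"
  shows "H = Hh"
proof
  fix M
  obtain r :: nat and L c where M: "M = (\<Sum>j<r. c j *\<^sub>R \<iota> (L j))" using span_rep by blast
  define Ts where "Ts n j = of_int \<lfloor>real (Suc n) * c j\<rfloor> / real (Suc n)" for n j
  have Tl: "\<forall>i<r. (\<lambda>n. Ts n i) \<longlonglongrightarrow> c i" unfolding Ts_def using floor_approx by blast
  have l1: "(\<lambda>n. H (\<Sum>i<r. Ts n i *\<^sub>R \<iota> (L i))) \<longlonglongrightarrow> H (\<Sum>i<r. c i *\<^sub>R \<iota> (L i))"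
    using spec[OF spec[OF spec[OF spec[OF P3[unfolded fin_dim_continuous_def], of r], of "\<lambda>i. \<iota> (L i)"], of c], of Ts] Tl
    by (rule mp)
  have l2: "(\<lambda>n. Hh (\<Sum>i<r. Ts n i *\<^sub>R \<iota> (L i))) \<longlonglongrightarrow> Hh (\<Sum>i<r. c i *\<^sub>R \<iota> (L i))"
    using spec[OF spec[OF spec[OF spec[OF Hh_cont[unfolded fin_dim_continuous_def], of r], of "\<lambda>i. \<iota> (L i)"], of c], of Ts] Tl
    by (rule mp)
  have eqn: "H (\<Sum>i<r. Ts n i *\<^sub>R \<iota> (L i)) = Hh (\<Sum>i<r. Ts n i *\<^sub>R \<iota> (L i))" for n
  proof -
    define p where "p j = \<lfloor>real (Suc n) * c j\<rfloor>" for j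
    define x where "x = gv L r p"
    have X: "(\<Sum>i<r. Ts n i *\<^sub>R \<iota> (L i)) = (1 / real (Suc n)) *\<^sub>R \<iota> x"
      unfolding x_def iota_gv Ts_def p_def by (simp add: scaleR_sum_right)
    have ha: "ereal (H (\<iota> x)) = limsup (\<lambda>m::nat. ereal (h (zmul (int m) x) / real m powr s))"
      using P1 by (rule spec)
    have "ereal (H (\<iota> x)) = ereal (Hh (\<iota> x))" using ha Hh_iota[of x] by (rule trans[OF _ sym])
    then have hx: "H (\<iota> x) = Hh (\<iota> x)" by simp
    have "H ((1 / real (Suc n)) *\<^sub>R \<iota> x) = (1 / real (Suc n)) powr s * H (\<iota> x)" using P2 by simp
    also have "\<dots> = (1 / real (Suc n)) powr s * Hh (\<iota> x)" using hx by simp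
    also have "\<dots> = Hh ((1 / real (Suc n)) *\<^sub>R \<iota> x)" by (rule Hh_scale[symmetric]) simp
    finally show ?thesis unfolding X .
  qed
  have "(\<lambda>n. H (\<Sum>i<r. Ts n i *\<^sub>R \<iota> (L i))) \<longlonglongrightarrow> Hh (\<Sum>i<r. c i *\<^sub>R \<iota> (L i))"
    using l2 unfolding eqn .
  then have "H (\<Sum>i<r. c i *\<^sub>R \<iota> (L i)) = Hh (\<Sum>i<r. c i *\<^sub>R \<iota> (L i))"
    using l1 LIMSEQ_unique by blast
  then show "H M = Hh M" unfolding M .
qed

theorem main:
  shows "\<exists>!H :: 'v \<Rightarrow> real.
           (\<forall>L. ereal (H (\<iota> L)) = limsup (\<lambda>m::nat. ereal (h (zmul (int m) L) / real m powr s))) \<and>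
           (\<forall>t M. t \<ge> 0 \<longrightarrow> H (t *\<^sub>R M) = t powr s * H M) \<and>
           fin_dim_continuous H"
proof (rule ex1I[of _ Hh])
  show "(\<forall>L. ereal (Hh (\<iota> L)) = limsup (\<lambda>m::nat. ereal (h (zmul (int m) L) / real m powr s))) \<and>
           (\<forall>t M. t \<ge> 0 \<longrightarrow> Hh (t *\<^sub>R M) = t powr s * Hh M) \<and>
           fin_dim_continuous Hh"
    using Hh_iota Hh_scale Hh_cont by simp
next
  fix H :: "'v \<Rightarrow> real"
  assume "(\<forall>L. ereal (H (\<iota> L)) = limsup (\<lambda>m::nat. ereal (h (zmul (int m) L) / real m powr s))) \<and>
           (\<forall>t M. t \<ge> 0 \<longrightarrow> H (t *\<^sub>R M) = t powr s * H M) \<and>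
           fin_dim_continuous H"
  then show "H = Hh" by (intro uniq) auto
qed

end

theorem theoremA1:
  fixes h :: "'p::ab_group_add \<Rightarrow> real" and s :: real
    and \<iota> :: "'p \<Rightarrow> 'v::real_vector"
  assumes tensor: "real_tensor \<iota>"
    and s_pos: "s > 0"
    and growth: "\<And>(r::nat) (L::nat \<Rightarrow> 'p). \<exists>C R::real. \<forall>m::nat \<Rightarrow> int.
        R \<le> (\<Sum>i\<in>{1..r}. real_of_int \<bar>m i\<bar>) \<longrightarrow>
        \<bar>h (\<Sum>i\<in>{1..r}. zmul (m i) (L i))\<bar>
          \<le> C * (\<Sum>i\<in>{1..r}. real_of_int \<bar>m i\<bar>) powr s"
    and diff: "\<And>(r::nat) (L::nat \<Rightarrow> 'p). \<exists>C R::real. \<forall>m::nat \<Rightarrow> int.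
        R \<le> (\<Sum>i\<in>{1..r}. real_of_int \<bar>m i\<bar>) \<longrightarrow>
        \<bar>h (L 0 + (\<Sum>i\<in>{1..r}. zmul (m i) (L i))) - h (\<Sum>i\<in>{1..r}. zmul (m i) (L i))\<bar>
          \<le> C * (\<Sum>i\<in>{1..r}. real_of_int \<bar>m i\<bar>) powr (s - 1)"
  shows "\<exists>!H :: 'v \<Rightarrow> real.
           (\<forall>L. ereal (H (\<iota> L)) = limsup (\<lambda>m::nat. ereal (h (zmul (int m) L) / real m powr s))) \<and>
           (\<forall>t M. t \<ge> 0 \<longrightarrow> H (t *\<^sub>R M) = t powr s * H M) \<and>
           fin_dim_continuous H"
proof -
  interpret htx h s \<iota>
    by (unfold_locales) (fact tensor, fact s_pos, fact growth, fact diff)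
  show ?thesis by (rule main)
qed


end
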